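(* Let $(s_{1,1},\ldots,s_{1,m})=\mathcal{N}(\sigma_1,\ldots,\sigma_m)$ be a Nikishin system, ${\bf n}\in\mathbb{Z}_+^m$, $Q_{\bf n}$ a type II Hermite–Padé polynomial of $(\widehat{s}_{1,1},\ldots,\widehat{s}_{1,m})$ for ${\bf n}$ with associated polynomials $P_{{\bf n},j}$, and set $\Phi_{{\bf n},j}=Q_{\bf n}\widehat{s}_{1,j}-P_{{\bf n},j}$, $j=1,\ldots,m$. Define $\Psi_{{\bf n},0}=Q_{\bf n}$ and $\Psi_{{\bf n},k}(z)=\int\frac{\Psi_{{\bf n},k-1}(x)}{z-x}d\sigma_k(x)$, $k=1,\ldots,m$. Then $\Psi_{{\bf n},1}=\Phi_{{\bf n},1}$ and for $j=2,\ldots,m$ \[ \Psi_{{\bf n},j}(z)=\sum_{k=2}^j(-1)^k\widehat{s}_{j,k}(z)\Phi_{{\bf n},k-1}(z)+(-1)^{j+1}\Phi_{{\bf n},j}(z),\qquad z\in\mathbb{C}\setminus(\Delta_1\cup\Delta_j), \] and \[ \Phi_{{\bf n},j}(z)=\sum_{k=2}^j(-1)^k\widehat{s}_{k,j}(z)\Psi_{{\bf n},k-1}(z)+(-1)^{j+1}\Psi_{{\bf n},j}(z),\qquad z\in\mathbb{C}\setminus\bigcup_{k=1}^j\Delta_k. \]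
   Context: For a bounded interval $\Delta\subset\mathbb{R}$, $\mathcal{M}(\Delta)$ is the class of finite Borel measures of constant sign whose compact support consists of infinitely many points, is contained in $\mathbb{R}$, and has $\Delta$ as the smallest interval containing it. The Cauchy transform of a measure $s$ is $\widehat{s}(z)=\int\frac{ds(x)}{z-x}$. Nikishin system: bounded real intervals $\Delta_1,\ldots,\Delta_m$ with $\Delta_j\cap\Delta_{j+1}=\emptyset$ ($j=1,\ldots,m-1$), $\sigma_j\in\mathcal{M}(\Delta_j)$ with $\mathrm{Co}(\operatorname{supp}\sigma_j)=\Delta_j$. For $1\le j\le k\le m$: $s_{j,j}=\sigma_j$ and $ds_{j,k}(x)=\widehat{s}_{j+1,k}(x)\,d\sigma_j(x)$ for $j<k$; $\mathcal{N}(\sigma_1,\ldots,\sigma_m)=(s_{1,1},\ldots,s_{1,m})$. For $1\le k<j\le m$: $s_{j,k}=\langle\sigma_j,\sigma_{j-1},\ldots,\sigma_k\rangle$, defined recursively by $ds_{j,k}(x)=\widehat{s}_{j-1,k}(x)\,d\sigma_j(x)$. Type II Hermite–Padé polynomial for ${\bf n}$, $|{\bf n}|=n_1+\cdots+n_m$: a polynomial $Q_{\bf n}\not\equiv0$, $\deg Q_{\bf n}\le|{\bf n}|$, such that for some polynomials $P_{{\bf n},j}$, $Q_{\bf n}(z)\widehat{s}_{1,j}(z)-P_{{\bf n},j}(z)=\mathcal{O}(1/z^{n_j+1})$ as $z\to\infty$, $j=1,\ldots,m$. *)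

theory Defs
  imports "HOL-Analysis.Analysis" "HOL-Computational_Algebra.Polynomial" "HOL-Library.Landau_Symbols"
begin

definition msupp :: "real measure \<Rightarrow> real set" where
  "msupp M = {x. \<forall>e>0. emeasure M (ball x e) > 0}"

text \<open>Class M(Delta) for Delta = [a,b]: a finite positive Borel measure M, multiplied by a
  sign eps in {1,-1} (constant sign), with compact infinite support whose convex hull is [a,b].\<close>
definition in_class_M :: "real measure \<Rightarrow> real \<Rightarrow> real \<Rightarrow> real \<Rightarrow> bool" where
  "in_class_M M eps a b \<longleftrightarrow>
     sets M = sets borel \<and> finite_measure M \<and> eps \<in> {1, -1} \<and>
     compact (msupp M) \<and> infinite (msupp M) \<and> convex hull (msupp M) = {a..b}"

definition cauchy_tr :: "real measure \<Rightarrow> real \<Rightarrow> (real \<Rightarrow> complex) \<Rightarrow> complex \<Rightarrow> complex" where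
  "cauchy_tr M eps f z = complex_of_real eps * (\<integral>x. f x / (z - complex_of_real x) \<partial>M)"

text \<open>Cauchy transforms of s_{j,j+d} (upwards) and s_{j,j-d} (downwards); sigma_j = eps j * M j.\<close>
fun nik_up :: "(nat \<Rightarrow> real measure) \<Rightarrow> (nat \<Rightarrow> real) \<Rightarrow> nat \<Rightarrow> nat \<Rightarrow> complex \<Rightarrow> complex" where
  "nik_up M eps j 0 z = cauchy_tr (M j) (eps j) (\<lambda>_. 1) z"
| "nik_up M eps j (Suc d) z =
     cauchy_tr (M j) (eps j) (\<lambda>x. nik_up M eps (Suc j) d (complex_of_real x)) z"

fun nik_down :: "(nat \<Rightarrow> real measure) \<Rightarrow> (nat \<Rightarrow> real) \<Rightarrow> nat \<Rightarrow> nat \<Rightarrow> complex \<Rightarrow> complex" where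
  "nik_down M eps j 0 z = cauchy_tr (M j) (eps j) (\<lambda>_. 1) z"
| "nik_down M eps j (Suc d) z =
     cauchy_tr (M j) (eps j) (\<lambda>x. nik_down M eps (j - 1) d (complex_of_real x)) z"

text \<open>Cauchy transform of s_{j,k} (1-based indices).\<close>
definition s_hat :: "(nat \<Rightarrow> real measure) \<Rightarrow> (nat \<Rightarrow> real) \<Rightarrow> nat \<Rightarrow> nat \<Rightarrow> complex \<Rightarrow> complex" where
  "s_hat M eps j k z = (if j \<le> k then nik_up M eps j (k - j) z else nik_down M eps j (j - k) z)"

fun Psi :: "(nat \<Rightarrow> real measure) \<Rightarrow> (nat \<Rightarrow> real) \<Rightarrow> complex poly \<Rightarrow> nat \<Rightarrow> complex \<Rightarrow> complex" where
  "Psi M eps Q 0 z = poly Q z"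
| "Psi M eps Q (Suc k) z = cauchy_tr (M (Suc k)) (eps (Suc k)) (\<lambda>x. Psi M eps Q k (complex_of_real x)) z"

end

theory Submission
  imports Defs
begin

lemma msupp_AE:
  assumes sets: "sets M = sets (borel :: real measure)"
  shows "AE x in M. x \<in> msupp M"
proof -
  define F where "F = {ball x e | x e. e > 0 \<and> emeasure M (ball x e) = 0}"
  have opF: "\<And>S. S \<in> F \<Longrightarrow> open S" unfolding F_def by auto
  obtain F' where F': "F' \<subseteq> F" "countable F'" "\<Union>F' = \<Union>F"
    using Lindelof[OF opF] by blast
  have null: "\<Union>F' \<in> null_sets M"
  proof -
    have "(\<Union>S\<in>F'. id S) \<in> null_sets M"
    proof (rule null_sets_UN'[OF F'(2)])
      fix S assume "S \<in> F'"
      then have "S \<in> F" using F' by blast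
      then obtain x e where xe: "S = ball x e" "emeasure M (ball x e) = 0" unfolding F_def by blast
      have "ball x e \<in> sets M" using sets by simp
      then show "id S \<in> null_sets M" using xe by (simp add: null_sets_def)
    qed
    then show ?thesis by simp
  qed
  show ?thesis
  proof (rule AE_I'[OF null])
    show "{x \<in> space M. x \<notin> msupp M} \<subseteq> \<Union>F'"
    proof
      fix x assume "x \<in> {x \<in> space M. x \<notin> msupp M}"
      then have "\<not> (\<forall>e>0. emeasure M (ball x e) > 0)" unfolding msupp_def by blast
      then obtain e where e: "e > 0" "\<not> emeasure M (ball x e) > 0" by blast
      then have "emeasure M (ball x e) = 0" by (simp add: not_gr_zero)
      then have "ball x e \<in> F" using e unfolding F_def by blast
      then have "x \<in> \<Union>F" using e(1) by (meson UnionI centre_in_ball)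
      then show "x \<in> \<Union>F'" using F' by simp
    qed
  qed
qed

lemma classM_AE:
  assumes "in_class_M M e a b"
  shows "AE x in M. x \<in> {a..b}" "finite_measure M" "sets M = sets borel" "e = 1 \<or> e = -1"
proof -
  have s: "sets M = sets borel" using assms unfolding in_class_M_def by auto
  have h: "convex hull (msupp M) = {a..b}" using assms unfolding in_class_M_def by (simp only: conj_assoc)
  have "msupp M \<subseteq> {a..b}" by (subst h[symmetric]) (rule hull_subset)
  then show "AE x in M. x \<in> {a..b}" using msupp_AE[OF s] by (auto elim!: eventually_mono)
  show "finite_measure M" "sets M = sets borel" "e = 1 \<or> e = -1" using assms unfolding in_class_M_def by auto
qed


definition bdd_on :: "(real \<Rightarrow> complex) \<Rightarrow> real set \<Rightarrow> bool" where
  "bdd_on h K \<longleftrightarrow> h \<in> borel_measurable borel \<and> (\<exists>B. \<forall>x\<in>K. norm (h x) \<le> B)"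

locale cmeas =
  fixes M :: "real measure" and K :: "real set"
  assumes fin: "finite_measure M" and sets: "sets M = sets borel" and ae: "AE x in M. x \<in> K"
    and cpt: "compact K"
begin

lemma meas: "h \<in> borel_measurable borel \<Longrightarrow> h \<in> borel_measurable M"
  by (simp add: measurable_cong_sets[OF sets refl])

lemma integrable_bdd:
  fixes h :: "real \<Rightarrow> 'b::{banach,second_countable_topology}"
  assumes "h \<in> borel_measurable borel" "\<forall>x\<in>K. norm (h x) \<le> B"
  shows "integrable M h"
proof (rule finite_measure.integrable_const_bound[OF fin, of h B])
  show "AE x in M. norm (h x) \<le> B" using ae assms(2) by (auto elim!: eventually_mono)
  show "h \<in> borel_measurable M" using assms(1) by (rule meas)
qed

lemma norm_integral_bdd:
  fixes h :: "real \<Rightarrow> complex"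
  assumes "h \<in> borel_measurable borel" "\<forall>x\<in>K. norm (h x) \<le> B"
  shows "norm (\<integral>x. h x \<partial>M) \<le> B * measure M (space M)"
proof -
  have i: "integrable M h" using integrable_bdd assms by blast
  have ic: "integrable M (\<lambda>x. B)" by (rule integrable_bdd[of _ "\<bar>B\<bar>"]) auto
  have "norm (\<integral>x. h x \<partial>M) \<le> (\<integral>x. norm (h x) \<partial>M)" by (rule integral_norm_bound)
  also have "\<dots> \<le> (\<integral>x. B \<partial>M)"
  proof (rule integral_mono_AE)
    show "integrable M (\<lambda>x. norm (h x))" using i by (rule integrable_norm)
    show "integrable M (\<lambda>x. B)" by (rule ic)
    show "AE x in M. norm (h x) \<le> B" using ae assms(2) by (auto elim!: eventually_mono)
  qed
  also have "\<dots> = B * measure M (space M)" by simp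
  finally show ?thesis .
qed

lemma ct_integrable:
  fixes h :: "real \<Rightarrow> complex"
  assumes "h \<in> borel_measurable borel" "\<forall>x\<in>K. norm (h x) \<le> B" "d > 0"
    "\<forall>x\<in>K. d \<le> norm (z - complex_of_real x)"
  shows "integrable M (\<lambda>x. h x / (z - complex_of_real x))"
    and "norm (cauchy_tr M e h z) \<le> \<bar>e\<bar> * (B / d * measure M (space M))"
proof -
  have b: "\<forall>x\<in>K. norm (h x / (z - complex_of_real x)) \<le> B / d"
  proof
    fix x assume x: "x \<in> K"
    have "norm (h x / (z - complex_of_real x)) = norm (h x) / norm (z - complex_of_real x)"
      by (simp add: norm_divide)
    also have "\<dots> \<le> B / d" using assms x
      by (intro frac_le) (auto intro: order_trans[OF norm_ge_zero])
    finally show "norm (h x / (z - complex_of_real x)) \<le> B / d" .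
  qed
  have m: "(\<lambda>x. h x / (z - complex_of_real x)) \<in> borel_measurable borel" using assms(1) by measurable
  show "integrable M (\<lambda>x. h x / (z - complex_of_real x))" by (rule integrable_bdd[OF m b])
  have "norm (cauchy_tr M e h z) = \<bar>e\<bar> * norm (\<integral>x. h x / (z - complex_of_real x) \<partial>M)"
    unfolding cauchy_tr_def by (simp add: norm_mult)
  also have "\<dots> \<le> \<bar>e\<bar> * (B / d * measure M (space M))"
    by (intro mult_left_mono norm_integral_bdd[OF m b]) auto
  finally show "norm (cauchy_tr M e h z) \<le> \<bar>e\<bar> * (B / d * measure M (space M))" .
qed

lemma ct_meas:
  fixes h :: "real \<Rightarrow> complex"
  assumes "h \<in> borel_measurable borel"
  shows "(\<lambda>y. cauchy_tr M e h (complex_of_real y)) \<in> borel_measurable borel"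
proof -
  interpret finite_measure M by (rule fin)
  have "(\<lambda>(y, x). h x / (complex_of_real y - complex_of_real x)) \<in> borel_measurable (borel \<Otimes>\<^sub>M borel)"
    using assms by measurable
  then have "(\<lambda>(y, x). h x / (complex_of_real y - complex_of_real x)) \<in> borel_measurable (borel \<Otimes>\<^sub>M M)"
    by (simp add: measurable_cong_sets[OF sets_pair_measure_cong[OF refl sets] refl])
  then have "(\<lambda>y. \<integral>x. h x / (complex_of_real y - complex_of_real x) \<partial>M) \<in> borel_measurable borel"
    by (rule borel_measurable_lebesgue_integral[of "\<lambda>y x. h x / (complex_of_real y - complex_of_real x)" borel])
  then show ?thesis unfolding cauchy_tr_def by measurable
qed

lemma ct_bdd:
  assumes "bdd_on h K" "compact J" "J \<inter> K = {}"
  shows "bdd_on (\<lambda>y. cauchy_tr M e h (complex_of_real y)) J"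
proof -
  obtain B where B: "\<forall>x\<in>K. norm (h x) \<le> B" and m: "h \<in> borel_measurable borel"
    using assms(1) unfolding bdd_on_def by blast
  obtain d where d: "d > 0" "\<forall>y\<in>J. \<forall>x\<in>K. d \<le> dist y x"
    using separate_compact_closed[OF assms(2) compact_imp_closed[OF cpt] assms(3)] by blast
  have "\<forall>y\<in>J. norm (cauchy_tr M e h (complex_of_real y)) \<le> \<bar>e\<bar> * (B / d * measure M (space M))"
  proof
    fix y assume y: "y \<in> J"
    have "\<forall>x\<in>K. d \<le> norm (complex_of_real y - complex_of_real x)"
      using d y by (metis dist_real_def norm_of_real of_real_diff)
    then show "norm (cauchy_tr M e h (complex_of_real y)) \<le> \<bar>e\<bar> * (B / d * measure M (space M))"
      using ct_integrable(2)[OF m B d(1)] by blast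
  qed
  then show ?thesis unfolding bdd_on_def using ct_meas[OF m] by blast
qed

end

lemma swap_integral:
  assumes A: "cmeas M1 K1" and B: "cmeas M2 K2" and disj: "K1 \<inter> K2 = {}"
    and f: "bdd_on f K1" and g: "bdd_on g K2"
  shows "(\<integral>x. f x * (\<integral>y. g y / (complex_of_real x - complex_of_real y) \<partial>M2) \<partial>M1)
       = (\<integral>y. g y * (\<integral>x. f x / (complex_of_real x - complex_of_real y) \<partial>M1) \<partial>M2)"
proof -
  interpret A: cmeas M1 K1 by fact
  interpret B: cmeas M2 K2 by fact
  interpret F1: finite_measure M1 by (rule A.fin)
  interpret F2: finite_measure M2 by (rule B.fin)
  interpret P: pair_sigma_finite M1 M2 by unfold_locales
  obtain Bf where Bf: "\<forall>x\<in>K1. norm (f x) \<le> Bf" and fm: "f \<in> borel_measurable borel"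
    using f unfolding bdd_on_def by blast
  obtain Bg where Bg: "\<forall>x\<in>K2. norm (g x) \<le> Bg" and gm: "g \<in> borel_measurable borel"
    using g unfolding bdd_on_def by blast
  obtain d where d: "d > 0" "\<forall>x\<in>K1. \<forall>y\<in>K2. d \<le> dist x y"
    using separate_compact_closed[OF A.cpt compact_imp_closed[OF B.cpt] disj] by blast
  define F where "F = (\<lambda>x y. f x * g y / (complex_of_real x - complex_of_real y))"
  have Fm: "case_prod F \<in> borel_measurable (M1 \<Otimes>\<^sub>M M2)"
  proof -
    have "case_prod F \<in> borel_measurable (borel \<Otimes>\<^sub>M borel)" unfolding F_def using fm gm by measurable
    then show ?thesis by (simp add: measurable_cong_sets[OF sets_pair_measure_cong[OF A.sets B.sets] refl])
  qed
  have K1s[measurable]: "K1 \<in> sets M1" using A.sets A.cpt by (simp add: compact_imp_closed borel_closed)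
  have K2s[measurable]: "K2 \<in> sets M2" using B.sets B.cpt by (simp add: compact_imp_closed borel_closed)
  have aeP: "AE p in M1 \<Otimes>\<^sub>M M2. fst p \<in> K1 \<and> snd p \<in> K2"
  proof (rule P.AE_pair_measure)
    show "{p \<in> space (M1 \<Otimes>\<^sub>M M2). fst p \<in> K1 \<and> snd p \<in> K2} \<in> sets (M1 \<Otimes>\<^sub>M M2)"
      by measurable
    show "AE x in M1. AE y in M2. fst (x, y) \<in> K1 \<and> snd (x, y) \<in> K2"
      using A.ae
    proof (rule eventually_mono)
      fix x assume "x \<in> K1"
      then show "AE y in M2. fst (x, y) \<in> K1 \<and> snd (x, y) \<in> K2"
        using B.ae by (auto elim!: eventually_mono)
    qed
  qed
  have Fi: "integrable (M1 \<Otimes>\<^sub>M M2) (case_prod F)"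
  proof (rule finite_measure.integrable_const_bound[where B="Bf * Bg / d"])
    show "finite_measure (M1 \<Otimes>\<^sub>M M2)" by (rule finite_measure_pair_measure[OF B.fin A.fin])
    show "AE p in M1 \<Otimes>\<^sub>M M2. norm (case_prod F p) \<le> Bf * Bg / d"
      using aeP
    proof (rule eventually_mono)
      fix p :: "real \<times> real" assume p: "fst p \<in> K1 \<and> snd p \<in> K2"
      obtain x y where xy: "p = (x, y)" by force
      have x: "x \<in> K1" and y: "y \<in> K2" using p xy by auto
      have dd: "d \<le> norm (complex_of_real x - complex_of_real y)"
        using d x y by (metis dist_real_def norm_of_real of_real_diff)
      have eq1: "norm (F x y) = norm (f x) * norm (g y) / norm (complex_of_real x - complex_of_real y)"
        unfolding F_def by (simp add: norm_mult norm_divide)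
      have "0 \<le> Bf" "0 \<le> Bg" using Bf Bg x y by (auto intro: order_trans[OF norm_ge_zero])
      then have "0 \<le> Bf * Bg" by simp
      have "norm (f x) * norm (g y) / norm (complex_of_real x - complex_of_real y) \<le> Bf * Bg / d"
        using Bf Bg x y dd d(1) \<open>0 \<le> Bf * Bg\<close> \<open>0 \<le> Bf\<close> \<open>0 \<le> Bg\<close>
        by (intro frac_le mult_mono) auto
      then show "norm (case_prod F p) \<le> Bf * Bg / d" using xy eq1 by simp
    qed
    show "case_prod F \<in> borel_measurable (M1 \<Otimes>\<^sub>M M2)" by (rule Fm)
  qed
  have "(\<integral>x. f x * (\<integral>y. g y / (complex_of_real x - complex_of_real y) \<partial>M2) \<partial>M1)
      = (\<integral>x. (\<integral>y. F x y \<partial>M2) \<partial>M1)"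
  proof (rule Bochner_Integration.integral_cong[OF refl])
    fix x
    have "(\<integral>y. F x y \<partial>M2) = (\<integral>y. f x * (g y / (complex_of_real x - complex_of_real y)) \<partial>M2)"
      unfolding F_def by simp
    also have "\<dots> = f x * (\<integral>y. g y / (complex_of_real x - complex_of_real y) \<partial>M2)"
      by (rule integral_mult_right_zero)
    finally show "f x * (\<integral>y. g y / (complex_of_real x - complex_of_real y) \<partial>M2) = (\<integral>y. F x y \<partial>M2)" by simp
  qed
  also have "\<dots> = (\<integral>y. (\<integral>x. F x y \<partial>M1) \<partial>M2)" using P.Fubini_integral[OF Fi] by simp
  also have "\<dots> = (\<integral>y. g y * (\<integral>x. f x / (complex_of_real x - complex_of_real y) \<partial>M1) \<partial>M2)"
  proof (rule Bochner_Integration.integral_cong[OF refl])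
    fix y
    have "(\<integral>x. F x y \<partial>M1) = (\<integral>x. g y * (f x / (complex_of_real x - complex_of_real y)) \<partial>M1)"
      unfolding F_def by (simp add: mult.commute)
    also have "\<dots> = g y * (\<integral>x. f x / (complex_of_real x - complex_of_real y) \<partial>M1)"
      by (rule integral_mult_right_zero)
    finally show "(\<integral>x. F x y \<partial>M1) = g y * (\<integral>x. f x / (complex_of_real x - complex_of_real y) \<partial>M1)" .
  qed
  finally show ?thesis .
qed

lemma bdd_on_poly: "compact K \<Longrightarrow> bdd_on (\<lambda>x. poly Q (complex_of_real x)) K"
proof -
  assume K: "compact K"
  have c: "continuous_on UNIV (\<lambda>x. poly Q (complex_of_real x))"
    by (intro continuous_intros)
  have "compact ((\<lambda>x. poly Q (complex_of_real x)) ` K)"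
    by (rule compact_continuous_image[OF continuous_on_subset[OF c] K]) auto
  then obtain B where "\<forall>y\<in>(\<lambda>x. poly Q (complex_of_real x)) ` K. norm y \<le> B"
    using compact_imp_bounded bounded_iff by metis
  then show ?thesis unfolding bdd_on_def using borel_measurable_continuous_onI[OF c] by auto
qed

lemma bdd_on_const: "bdd_on (\<lambda>x. c) K"
  unfolding bdd_on_def by auto

lemma bdd_on_mult: "bdd_on f K \<Longrightarrow> bdd_on g K \<Longrightarrow> bdd_on (\<lambda>x. f x * g x) K"
proof -
  assume f: "bdd_on f K" and g: "bdd_on g K"
  obtain Bf where Bf: "\<forall>x\<in>K. norm (f x) \<le> Bf" and fm: "f \<in> borel_measurable borel"
    using f unfolding bdd_on_def by blast
  obtain Bg where Bg: "\<forall>x\<in>K. norm (g x) \<le> Bg" and gm: "g \<in> borel_measurable borel"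
    using g unfolding bdd_on_def by blast
  have "\<forall>x\<in>K. norm (f x * g x) \<le> Bf * Bg"
  proof
    fix x assume x: "x \<in> K"
    have "norm (f x * g x) = norm (f x) * norm (g x)" by (simp add: norm_mult)
    also have "\<dots> \<le> Bf * Bg" using Bf Bg x by (intro mult_mono) (auto intro: order_trans[OF norm_ge_zero])
    finally show "norm (f x * g x) \<le> Bf * Bg" .
  qed
  moreover have "(\<lambda>x. f x * g x) \<in> borel_measurable borel" using fm gm by measurable
  ultimately show ?thesis unfolding bdd_on_def by blast
qed

lemma bdd_on_add: "bdd_on f K \<Longrightarrow> bdd_on g K \<Longrightarrow> bdd_on (\<lambda>x. f x + g x) K"
proof -
  assume f: "bdd_on f K" and g: "bdd_on g K"
  obtain Bf where Bf: "\<forall>x\<in>K. norm (f x) \<le> Bf" and fm: "f \<in> borel_measurable borel"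
    using f unfolding bdd_on_def by blast
  obtain Bg where Bg: "\<forall>x\<in>K. norm (g x) \<le> Bg" and gm: "g \<in> borel_measurable borel"
    using g unfolding bdd_on_def by blast
  have "\<forall>x\<in>K. norm (f x + g x) \<le> Bf + Bg"
    using Bf Bg by (auto intro: order_trans[OF norm_triangle_ineq] add_mono)
  moreover have "(\<lambda>x. f x + g x) \<in> borel_measurable borel" using fm gm by measurable
  ultimately show ?thesis unfolding bdd_on_def by blast
qed

lemma bdd_on_uminus: "bdd_on f K \<Longrightarrow> bdd_on (\<lambda>x. - f x) K"
  unfolding bdd_on_def by auto

lemma bdd_on_diff: "bdd_on f K \<Longrightarrow> bdd_on g K \<Longrightarrow> bdd_on (\<lambda>x. f x - g x) K"
  using bdd_on_add[of f K "\<lambda>x. - g x"] bdd_on_uminus[of g K] by simp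

lemma sep_of:
  assumes K: "compact K" and z: "z \<notin> complex_of_real ` K"
  shows "\<exists>d>0. \<forall>x\<in>K. d \<le> norm (z - complex_of_real x)"
proof -
  have "compact (complex_of_real ` K)"
    by (rule compact_continuous_image[OF _ K]) (intro continuous_intros)
  then obtain d where d: "d > 0" "\<forall>w\<in>complex_of_real ` K. d \<le> dist z w"
    using separate_point_closed[OF compact_imp_closed z] by blast
  then show ?thesis by (auto simp: dist_norm)
qed

lemma bdd_on_inv:
  assumes K: "compact K" and z: "z \<notin> complex_of_real ` K"
  shows "bdd_on (\<lambda>x. 1 / (z - complex_of_real x)) K"
proof -
  obtain d where d: "d > 0" "\<forall>x\<in>K. d \<le> norm (z - complex_of_real x)" using sep_of[OF K z] by blast
  have "\<forall>x\<in>K. norm (1 / (z - complex_of_real x)) \<le> 1 / d"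
    using d by (auto simp: norm_divide intro!: frac_le)
  moreover have "(\<lambda>x. 1 / (z - complex_of_real x)) \<in> borel_measurable borel" by measurable
  ultimately show ?thesis unfolding bdd_on_def by blast
qed

lemma poly_tendsto_0_imp_zero:
  fixes p :: "complex poly"
  assumes lim: "((\<lambda>z. poly p z) \<longlongrightarrow> 0) at_infinity"
  shows "p = 0"
proof (cases "degree p = 0")
  case True
  then obtain c where c: "p = [:c:]" using degree_eq_zeroE by blast
  have ne: "(at_infinity :: complex filter) \<noteq> bot" using trivial_limit_at_infinity by blast
  have "((\<lambda>z::complex. c) \<longlongrightarrow> 0) at_infinity" using lim c by simp
  then have "c = 0" using tendsto_unique[OF ne tendsto_const] by blast
  then show ?thesis using c by simp
next
  case False
  have ne: "(at_infinity :: complex filter) \<noteq> bot" using trivial_limit_at_infinity by blast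
  have "filterlim (poly p) at_infinity at_infinity" using False by (intro filterlim_poly_at_infinity) simp
  then show ?thesis using not_tendsto_and_filterlim_at_infinity[OF ne lim] by simp
qed

context cmeas
begin

lemma poly_ct_aux:
  assumes g: "bdd_on g K"
  shows "\<exists>p. \<forall>z. z \<notin> complex_of_real ` K \<longrightarrow>
     complex_of_real e * (\<integral>x. (poly Q z - poly Q (complex_of_real x)) * g x / (z - complex_of_real x) \<partial>M) = poly p z"
proof (induction Q)
  case 0
  show ?case by (rule exI[of _ 0]) simp
next
  case (pCons c R)
  then obtain p where p: "\<And>z. z \<notin> complex_of_real ` K \<Longrightarrow>
     complex_of_real e * (\<integral>x. (poly R z - poly R (complex_of_real x)) * g x / (z - complex_of_real x) \<partial>M) = poly p z"
    by blast
  obtain Bg where Bg: "\<forall>x\<in>K. norm (g x) \<le> Bg" and gm: "g \<in> borel_measurable borel"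
    using g unfolding bdd_on_def by blast
  define I2 where "I2 = (\<integral>x. poly R (complex_of_real x) * g x \<partial>M)"
  have pm[measurable]: "\<And>P. (\<lambda>x. poly P (complex_of_real x)) \<in> borel_measurable borel"
    by (intro borel_measurable_continuous_onI continuous_intros)
  show ?case
  proof (rule exI[of _ "pCons (complex_of_real e * I2) p"], intro allI impI)
    fix z assume z: "z \<notin> complex_of_real ` K"
    obtain d where d: "d > 0" "\<forall>x\<in>K. d \<le> norm (z - complex_of_real x)" using sep_of[OF cpt z] by blast
    have b1: "bdd_on (\<lambda>x. (poly R z - poly R (complex_of_real x)) * g x) K"
      by (intro bdd_on_mult bdd_on_diff bdd_on_const bdd_on_poly cpt g)
    then obtain B1 where B1: "\<forall>x\<in>K. norm ((poly R z - poly R (complex_of_real x)) * g x) \<le> B1"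
      and m1: "(\<lambda>x. (poly R z - poly R (complex_of_real x)) * g x) \<in> borel_measurable borel"
      unfolding bdd_on_def by blast
    have i1: "integrable M (\<lambda>x. (poly R z - poly R (complex_of_real x)) * g x / (z - complex_of_real x))"
      by (rule ct_integrable(1)[OF m1 B1 d])
    have b2: "bdd_on (\<lambda>x. poly R (complex_of_real x) * g x) K"
      by (intro bdd_on_mult bdd_on_poly cpt g)
    then obtain B2 where B2: "\<forall>x\<in>K. norm (poly R (complex_of_real x) * g x) \<le> B2"
      and m2: "(\<lambda>x. poly R (complex_of_real x) * g x) \<in> borel_measurable borel"
      unfolding bdd_on_def by blast
    have i2: "integrable M (\<lambda>x. poly R (complex_of_real x) * g x)" by (rule integrable_bdd[OF m2 B2])
    have "(\<integral>x. (poly (pCons c R) z - poly (pCons c R) (complex_of_real x)) * g x / (z - complex_of_real x) \<partial>M)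
       = (\<integral>x. z * ((poly R z - poly R (complex_of_real x)) * g x / (z - complex_of_real x))
              + poly R (complex_of_real x) * g x \<partial>M)"
    proof (rule integral_cong_AE)
      show "(\<lambda>x. (poly (pCons c R) z - poly (pCons c R) (complex_of_real x)) * g x / (z - complex_of_real x)) \<in> borel_measurable M"
        by (rule meas) (use gm pm in measurable)
      show "(\<lambda>x. z * ((poly R z - poly R (complex_of_real x)) * g x / (z - complex_of_real x))
              + poly R (complex_of_real x) * g x) \<in> borel_measurable M"
        by (rule meas) (use m1 m2 in measurable)
      show "AE x in M. (poly (pCons c R) z - poly (pCons c R) (complex_of_real x)) * g x / (z - complex_of_real x)
          = z * ((poly R z - poly R (complex_of_real x)) * g x / (z - complex_of_real x))
              + poly R (complex_of_real x) * g x"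
        using ae
      proof (rule eventually_mono)
        fix x assume x: "x \<in> K"
        then have nz: "z - complex_of_real x \<noteq> 0" using z by auto
        show "(poly (pCons c R) z - poly (pCons c R) (complex_of_real x)) * g x / (z - complex_of_real x)
          = z * ((poly R z - poly R (complex_of_real x)) * g x / (z - complex_of_real x))
              + poly R (complex_of_real x) * g x"
          using nz by (simp add: field_simps)
      qed
    qed
    also have "\<dots> = (\<integral>x. z * ((poly R z - poly R (complex_of_real x)) * g x / (z - complex_of_real x)) \<partial>M) + I2"
      unfolding I2_def by (rule Bochner_Integration.integral_add[OF integrable_mult_right[OF i1] i2])
    also have "(\<integral>x. z * ((poly R z - poly R (complex_of_real x)) * g x / (z - complex_of_real x)) \<partial>M)
       = z * (\<integral>x. (poly R z - poly R (complex_of_real x)) * g x / (z - complex_of_real x) \<partial>M)"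
      by (rule integral_mult_right_zero)
    finally show "complex_of_real e * (\<integral>x. (poly (pCons c R) z - poly (pCons c R) (complex_of_real x)) * g x / (z - complex_of_real x) \<partial>M)
        = poly (pCons (complex_of_real e * I2) p) z"
      using p[OF z] by (simp add: algebra_simps)
  qed
qed

lemma poly_ct:
  assumes g: "bdd_on g K"
  shows "\<exists>p. \<forall>z. z \<notin> complex_of_real ` K \<longrightarrow>
     poly Q z * cauchy_tr M e g z - cauchy_tr M e (\<lambda>x. poly Q (complex_of_real x) * g x) z = poly p z"
proof -
  obtain p where p: "\<And>z. z \<notin> complex_of_real ` K \<Longrightarrow>
     complex_of_real e * (\<integral>x. (poly Q z - poly Q (complex_of_real x)) * g x / (z - complex_of_real x) \<partial>M) = poly p z"
    using poly_ct_aux[OF g, where Q=Q] by blast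
  show ?thesis
  proof (rule exI[of _ p], intro allI impI)
    fix z assume z: "z \<notin> complex_of_real ` K"
    obtain d where d: "d > 0" "\<forall>x\<in>K. d \<le> norm (z - complex_of_real x)" using sep_of[OF cpt z] by blast
    obtain Bg where Bg: "\<forall>x\<in>K. norm (g x) \<le> Bg" and gm: "g \<in> borel_measurable borel"
      using g unfolding bdd_on_def by blast
    have i1: "integrable M (\<lambda>x. g x / (z - complex_of_real x))" by (rule ct_integrable(1)[OF gm Bg d])
    have b2: "bdd_on (\<lambda>x. poly Q (complex_of_real x) * g x) K"
      by (intro bdd_on_mult bdd_on_poly cpt g)
    then obtain B2 where B2: "\<forall>x\<in>K. norm (poly Q (complex_of_real x) * g x) \<le> B2"
      and m2: "(\<lambda>x. poly Q (complex_of_real x) * g x) \<in> borel_measurable borel"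
      unfolding bdd_on_def by blast
    have i2: "integrable M (\<lambda>x. poly Q (complex_of_real x) * g x / (z - complex_of_real x))"
      by (rule ct_integrable(1)[OF m2 B2 d])
    have i1': "integrable M (\<lambda>x. poly Q z * (g x / (z - complex_of_real x)))"
      using i1 by (rule integrable_mult_right)
    have "poly Q z * cauchy_tr M e g z - cauchy_tr M e (\<lambda>x. poly Q (complex_of_real x) * g x) z
      = complex_of_real e * ((\<integral>x. poly Q z * (g x / (z - complex_of_real x)) \<partial>M)
          - (\<integral>x. poly Q (complex_of_real x) * g x / (z - complex_of_real x) \<partial>M))"
      unfolding cauchy_tr_def integral_mult_right_zero by (simp only: algebra_simps)
    also have "\<dots> = complex_of_real e * (\<integral>x. poly Q z * (g x / (z - complex_of_real x))
          - poly Q (complex_of_real x) * g x / (z - complex_of_real x) \<partial>M)"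
      by (subst Bochner_Integration.integral_diff[OF i1' i2]) (rule refl)
    also have "\<dots> = complex_of_real e * (\<integral>x. (poly Q z - poly Q (complex_of_real x)) * g x / (z - complex_of_real x) \<partial>M)"
      by (simp add: algebra_simps diff_divide_distrib)
    also have "\<dots> = poly p z" by (rule p[OF z])
    finally show "poly Q z * cauchy_tr M e g z - cauchy_tr M e (\<lambda>x. poly Q (complex_of_real x) * g x) z = poly p z" .
  qed
qed

lemma ct_tendsto:
  assumes h: "bdd_on h K"
  shows "((\<lambda>z. cauchy_tr M e h z) \<longlongrightarrow> 0) at_infinity"
proof -
  obtain B where B: "\<forall>x\<in>K. norm (h x) \<le> B" and hm: "h \<in> borel_measurable borel"
    using h unfolding bdd_on_def by blast
  obtain R where R: "\<forall>x\<in>K. norm x \<le> R" using compact_imp_bounded[OF cpt] bounded_iff by metis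
  define c where "c = \<bar>e\<bar> * B * measure M (space M)"
  have ev: "eventually (\<lambda>z. norm (cauchy_tr M e h z) \<le> c / (norm z - R)) at_infinity"
    unfolding eventually_at_infinity
  proof (rule exI[of _ "R + 1"], intro allI impI)
    fix z :: complex assume z: "R + 1 \<le> norm z"
    have "\<forall>x\<in>K. norm z - R \<le> norm (z - complex_of_real x)"
    proof
      fix x assume x: "x \<in> K"
      have "norm z - norm (complex_of_real x) \<le> norm (z - complex_of_real x)" by (rule norm_triangle_ineq2)
      moreover have "norm (complex_of_real x) \<le> R" using R x by simp
      ultimately show "norm z - R \<le> norm (z - complex_of_real x)" by linarith
    qed
    then have "norm (cauchy_tr M e h z) \<le> \<bar>e\<bar> * (B / (norm z - R) * measure M (space M))"
      using ct_integrable(2)[OF hm B, of "norm z - R" z] z by simp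
    then show "norm (cauchy_tr M e h z) \<le> c / (norm z - R)" unfolding c_def by simp
  qed
  have "LIM z at_infinity. (-R) + norm (z::complex) :> at_top"
    by (rule filterlim_tendsto_add_at_top[OF tendsto_const filterlim_norm_at_top])
  then have "LIM z at_infinity. norm (z::complex) - R :> at_infinity"
    by (intro filterlim_at_top_imp_at_infinity) simp
  then have "((\<lambda>z::complex. c / (norm z - R)) \<longlongrightarrow> 0) at_infinity"
    by (rule tendsto_divide_0[OF tendsto_const])
  then show ?thesis by (rule Lim_null_comparison[OF ev])
qed

end


definition Sint :: "real measure \<Rightarrow> real \<Rightarrow> (real \<Rightarrow> complex) \<Rightarrow> complex" where
  "Sint M e f = complex_of_real e * (\<integral>x. f x \<partial>M)"

lemma ct_Sint: "cauchy_tr M e h w = Sint M e (\<lambda>x. h x / (w - complex_of_real x))"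
  unfolding cauchy_tr_def Sint_def ..

lemma bdd_on_ofreal: "compact K \<Longrightarrow> bdd_on (\<lambda>x. complex_of_real x) K"
  using bdd_on_poly[of K "[:0, 1:]"] by simp

lemma bdd_on_meas: "bdd_on f K \<Longrightarrow> f \<in> borel_measurable borel"
  unfolding bdd_on_def by blast

lemma bdd_on_inv_real:
  assumes K: "compact K" and y: "y \<notin> K"
  shows "bdd_on (\<lambda>x. 1 / (complex_of_real y - complex_of_real x)) K"
proof -
  have "complex_of_real y \<notin> complex_of_real ` K" using y by (auto simp: of_real_eq_iff)
  then show ?thesis by (rule bdd_on_inv[OF K])
qed

lemma resolv_id:
  fixes c u v w :: complex
  assumes "u - w \<noteq> 0" "v - w \<noteq> 0" "u - v \<noteq> 0"
  shows "c / (u - w) / (v - w) = (1 / (u - v)) * (c * (1 / (v - w)) - c * (1 / (u - w)))"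
proof -
  have e1: "c * (1 / (v - w)) - c * (1 / (u - w)) = c * (u - v) / ((v - w) * (u - w))"
    using assms by (simp add: field_simps)
  have e2: "(1 / (u - v)) * (c * (u - v) / ((v - w) * (u - w))) = c / ((v - w) * (u - w))"
    using assms by simp
  show ?thesis unfolding e1 e2 by (simp add: divide_divide_eq_left mult.commute)
qed

lemma res1_id:
  fixes c u v w :: complex
  assumes "v - w \<noteq> 0"
  shows "c * (u - w) / (v - w) = (u - v) * (c * (1 / (v - w))) + c"
  using assms by (simp add: field_simps)

context cmeas
begin

lemma Sint_cong:
  assumes "f \<in> borel_measurable borel" "g \<in> borel_measurable borel" "\<And>x. x \<in> K \<Longrightarrow> f x = g x"
  shows "Sint M e f = Sint M e g"
proof -
  have "(\<integral>x. f x \<partial>M) = (\<integral>x. g x \<partial>M)"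
  proof (rule integral_cong_AE)
    show "f \<in> borel_measurable M" "g \<in> borel_measurable M" using assms(1,2) by (auto intro: meas)
    show "AE x in M. f x = g x" using ae by (rule eventually_mono) (rule assms(3))
  qed
  then show ?thesis unfolding Sint_def by simp
qed

lemma bdd_integrable: "bdd_on f K \<Longrightarrow> integrable M f"
  unfolding bdd_on_def using integrable_bdd by blast

lemma Sint_add: "bdd_on f K \<Longrightarrow> bdd_on g K \<Longrightarrow> Sint M e (\<lambda>x. f x + g x) = Sint M e f + Sint M e g"
  unfolding Sint_def
  by (subst Bochner_Integration.integral_add[OF bdd_integrable bdd_integrable]) (auto simp: algebra_simps)

lemma Sint_diff: "bdd_on f K \<Longrightarrow> bdd_on g K \<Longrightarrow> Sint M e (\<lambda>x. f x - g x) = Sint M e f - Sint M e g"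
  unfolding Sint_def
  by (subst Bochner_Integration.integral_diff[OF bdd_integrable bdd_integrable]) (auto simp: algebra_simps)

lemma Sint_cmult: "Sint M e (\<lambda>x. c * f x) = c * Sint M e f"
  unfolding Sint_def by simp

lemma res1:
  assumes L: "bdd_on L K" and y: "y \<notin> K"
  shows "cauchy_tr M e (\<lambda>x. L x * (z - complex_of_real x)) (complex_of_real y)
       = (z - complex_of_real y) * cauchy_tr M e L (complex_of_real y) + Sint M e L"
proof -
  have bi: "bdd_on (\<lambda>x. L x * (1 / (complex_of_real y - complex_of_real x))) K"
    by (intro bdd_on_mult L bdd_on_inv_real cpt y)
  have Lm: "L \<in> borel_measurable borel" using L by (rule bdd_on_meas)
  have "cauchy_tr M e (\<lambda>x. L x * (z - complex_of_real x)) (complex_of_real y)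
      = Sint M e (\<lambda>x. (z - complex_of_real y) * (L x * (1 / (complex_of_real y - complex_of_real x))) + L x)"
    unfolding ct_Sint
  proof (rule Sint_cong)
    show "(\<lambda>x. L x * (z - complex_of_real x) / (complex_of_real y - complex_of_real x)) \<in> borel_measurable borel"
      using Lm by measurable
    show "(\<lambda>x. (z - complex_of_real y) * (L x * (1 / (complex_of_real y - complex_of_real x))) + L x) \<in> borel_measurable borel"
      using Lm by measurable
    fix x assume x: "x \<in> K"
    then have "complex_of_real y - complex_of_real x \<noteq> 0" using y by auto
    then show "L x * (z - complex_of_real x) / (complex_of_real y - complex_of_real x)
        = (z - complex_of_real y) * (L x * (1 / (complex_of_real y - complex_of_real x))) + L x"
      by (rule res1_id)
  qed
  also have "\<dots> = (z - complex_of_real y) * Sint M e (\<lambda>x. L x * (1 / (complex_of_real y - complex_of_real x))) + Sint M e L"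
    by (simp only: Sint_add[OF bdd_on_mult[OF bdd_on_const bi] L] Sint_cmult)
  also have "Sint M e (\<lambda>x. L x * (1 / (complex_of_real y - complex_of_real x))) = cauchy_tr M e L (complex_of_real y)"
    unfolding ct_Sint by simp
  finally show ?thesis .
qed

lemma res2:
  assumes h: "bdd_on h K" and y: "y \<notin> K" and z: "z \<notin> complex_of_real ` K" and zy: "z \<noteq> complex_of_real y"
  shows "cauchy_tr M e (\<lambda>x. h x / (z - complex_of_real x)) (complex_of_real y)
       = (cauchy_tr M e h (complex_of_real y) - cauchy_tr M e h z) / (z - complex_of_real y)"
proof -
  have b1: "bdd_on (\<lambda>x. h x * (1 / (complex_of_real y - complex_of_real x))) K"
    by (intro bdd_on_mult h bdd_on_inv_real cpt y)
  have b2: "bdd_on (\<lambda>x. h x * (1 / (z - complex_of_real x))) K"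
    by (intro bdd_on_mult h bdd_on_inv cpt z)
  have hm: "h \<in> borel_measurable borel" using h by (rule bdd_on_meas)
  have "cauchy_tr M e (\<lambda>x. h x / (z - complex_of_real x)) (complex_of_real y)
      = Sint M e (\<lambda>x. (1 / (z - complex_of_real y)) * (h x * (1 / (complex_of_real y - complex_of_real x))
            - h x * (1 / (z - complex_of_real x))))"
    unfolding ct_Sint
  proof (rule Sint_cong)
    show "(\<lambda>x. h x / (z - complex_of_real x) / (complex_of_real y - complex_of_real x)) \<in> borel_measurable borel"
      using hm by measurable
    show "(\<lambda>x. (1 / (z - complex_of_real y)) * (h x * (1 / (complex_of_real y - complex_of_real x))
            - h x * (1 / (z - complex_of_real x)))) \<in> borel_measurable borel"
      using hm by measurable
    fix x assume x: "x \<in> K"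
    then have n1: "complex_of_real y - complex_of_real x \<noteq> 0" using y by auto
    have n2: "z - complex_of_real x \<noteq> 0" using z x by auto
    have n3: "z - complex_of_real y \<noteq> 0" using zy by auto
    show "h x / (z - complex_of_real x) / (complex_of_real y - complex_of_real x)
        = (1 / (z - complex_of_real y)) * (h x * (1 / (complex_of_real y - complex_of_real x))
            - h x * (1 / (z - complex_of_real x)))"
      by (rule resolv_id[OF n2 n1 n3])
  qed
  also have "\<dots> = (1 / (z - complex_of_real y)) * (Sint M e (\<lambda>x. h x * (1 / (complex_of_real y - complex_of_real x)))
            - Sint M e (\<lambda>x. h x * (1 / (z - complex_of_real x))))"
    by (subst Sint_cmult) (subst Sint_diff[OF b1 b2], rule refl)
  also have "\<dots> = (cauchy_tr M e h (complex_of_real y) - cauchy_tr M e h z) / (z - complex_of_real y)"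
    unfolding ct_Sint by simp
  finally show ?thesis .
qed

end

lemma div_diff_swap: "(c::complex) / (a - b) = - (c / (b - a))"
  by (metis divide_minus_right minus_diff_eq)

lemma Sw:
  assumes A: "cmeas M1 K1" and B: "cmeas M2 K2" and disj: "K1 \<inter> K2 = {}"
    and f: "bdd_on f K1" and g: "bdd_on g K2"
  shows "Sint M1 e1 (\<lambda>x. f x * cauchy_tr M2 e2 g (complex_of_real x))
       = - Sint M2 e2 (\<lambda>y. g y * cauchy_tr M1 e1 f (complex_of_real y))"
proof -
  have L: "Sint M1 e1 (\<lambda>x. f x * cauchy_tr M2 e2 g (complex_of_real x))
     = complex_of_real e1 * complex_of_real e2 *
       (\<integral>x. f x * (\<integral>y. g y / (complex_of_real x - complex_of_real y) \<partial>M2) \<partial>M1)"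
  proof -
    have "(\<lambda>x. f x * cauchy_tr M2 e2 g (complex_of_real x))
        = (\<lambda>x. complex_of_real e2 * (f x * (\<integral>y. g y / (complex_of_real x - complex_of_real y) \<partial>M2)))"
      unfolding cauchy_tr_def by (simp add: mult_ac)
    then show ?thesis unfolding Sint_def by simp
  qed
  have R: "Sint M2 e2 (\<lambda>y. g y * cauchy_tr M1 e1 f (complex_of_real y))
     = - (complex_of_real e1 * complex_of_real e2 *
       (\<integral>y. g y * (\<integral>x. f x / (complex_of_real x - complex_of_real y) \<partial>M1) \<partial>M2))"
  proof -
    have eq: "\<And>y. (\<integral>x. f x / (complex_of_real y - complex_of_real x) \<partial>M1)
        = - (\<integral>x. f x / (complex_of_real x - complex_of_real y) \<partial>M1)"
    proof -
      fix y
      have "(\<lambda>x. f x / (complex_of_real y - complex_of_real x)) = (\<lambda>x. - (f x / (complex_of_real x - complex_of_real y)))"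
        by (rule ext) (rule div_diff_swap)
      then show "(\<integral>x. f x / (complex_of_real y - complex_of_real x) \<partial>M1)
        = - (\<integral>x. f x / (complex_of_real x - complex_of_real y) \<partial>M1)" by simp
    qed
    have "(\<lambda>y. g y * cauchy_tr M1 e1 f (complex_of_real y))
        = (\<lambda>y. (- complex_of_real e1) * (g y * (\<integral>x. f x / (complex_of_real x - complex_of_real y) \<partial>M1)))"
      unfolding cauchy_tr_def eq by (simp add: mult_ac)
    then show ?thesis unfolding Sint_def by simp
  qed
  show ?thesis unfolding L R swap_integral[OF A B disj f g] by simp
qed


definition gup :: "(nat \<Rightarrow> real measure) \<Rightarrow> (nat \<Rightarrow> real) \<Rightarrow> nat \<Rightarrow> nat \<Rightarrow> real \<Rightarrow> complex" where
  "gup M eps j i x = (if i = j then 1 else nik_up M eps (Suc i) (j - Suc i) (complex_of_real x))"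

definition hdn :: "(nat \<Rightarrow> real measure) \<Rightarrow> (nat \<Rightarrow> real) \<Rightarrow> nat \<Rightarrow> nat \<Rightarrow> real \<Rightarrow> complex" where
  "hdn M eps k l x = (if l = k then 1 else nik_down M eps (l - 1) (l - 1 - k) (complex_of_real x))"

fun Lch :: "(nat \<Rightarrow> real measure) \<Rightarrow> (nat \<Rightarrow> real) \<Rightarrow> complex poly \<Rightarrow> complex \<Rightarrow> nat \<Rightarrow> real \<Rightarrow> complex" where
  "Lch M eps Q z 0 x = poly Q (complex_of_real x) / (z - complex_of_real x)"
| "Lch M eps Q z (Suc k) x = cauchy_tr (M (Suc k)) (eps (Suc k)) (Lch M eps Q z k) (complex_of_real x)"

fun Rch :: "(nat \<Rightarrow> real measure) \<Rightarrow> (nat \<Rightarrow> real) \<Rightarrow> complex \<Rightarrow> nat \<Rightarrow> nat \<Rightarrow> real \<Rightarrow> complex" where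
  "Rch M eps z j 0 x = 1 / (z - complex_of_real x)"
| "Rch M eps z j (Suc d) x = cauchy_tr (M (j - d)) (eps (j - d)) (Rch M eps z j d) (complex_of_real x)"

lemma telesc:
  fixes A c :: "nat \<Rightarrow> complex"
  assumes "p \<le> q" and rec: "\<And>i. p \<le> i \<Longrightarrow> i < q \<Longrightarrow> A i = c i - A (Suc i)"
  shows "A p = (\<Sum>i=p..<q. (-1)^(i - p) * c i) + (-1)^(q - p) * A q"
  using assms(1)
proof (induction q rule: dec_induct)
  case base
  then show ?case by simp
next
  case (step n)
  have "A p = (\<Sum>i=p..<n. (-1)^(i - p) * c i) + (-1)^(n - p) * (c n - A (Suc n))"
    using step.IH rec[OF step.hyps(1)] step.hyps(2) assms(2) by simp
  also have "\<dots> = (\<Sum>i=p..<Suc n. (-1)^(i - p) * c i) + (-1)^(Suc n - p) * A (Suc n)"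
    using step.hyps(1) by (simp add: Suc_diff_le algebra_simps)
  finally show ?case .
qed

lemma m1_eq: "even (a + b) \<Longrightarrow> (-1::complex)^a = (-1)^b"
  by (cases "even a") (auto simp: minus_one_power_iff)

locale nik =
  fixes m :: nat and M :: "nat \<Rightarrow> real measure" and eps :: "nat \<Rightarrow> real" and a b :: "nat \<Rightarrow> real"
  assumes meas: "\<And>j. j \<in> {1..m} \<Longrightarrow> in_class_M (M j) (eps j) (a j) (b j)"
    and disj: "\<And>j. j \<in> {1..<m} \<Longrightarrow> {a j..b j} \<inter> {a (Suc j)..b (Suc j)} = {}"
begin

lemma cm: "1 \<le> j \<Longrightarrow> j \<le> m \<Longrightarrow> cmeas (M j) {a j..b j}"
proof -
  assume "1 \<le> j" "j \<le> m"
  then have c: "in_class_M (M j) (eps j) (a j) (b j)" using meas by auto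
  show ?thesis
  proof (rule cmeas.intro)
    show "finite_measure (M j)" by (rule classM_AE(2)[OF c])
    show "sets (M j) = sets borel" by (rule classM_AE(3)[OF c])
    show "AE x in M j. x \<in> {a j..b j}" by (rule classM_AE(1)[OF c])
    show "compact {a j..b j}" by (rule compact_Icc)
  qed
qed

lemma adj_disj:
  assumes "1 \<le> i" "i \<le> m" "1 \<le> k" "k \<le> m" "k = Suc i \<or> i = Suc k"
  shows "{a k..b k} \<inter> {a i..b i} = {}"
  using assms disj[of i] disj[of k] by (auto simp: Int_commute)

lemma C_bdd:
  assumes "1 \<le> i" "i \<le> m" "1 \<le> k" "k \<le> m" "k = Suc i \<or> i = Suc k" "bdd_on h {a i..b i}"
  shows "bdd_on (\<lambda>y. cauchy_tr (M i) (eps i) h (complex_of_real y)) {a k..b k}"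
  using cmeas.ct_bdd[OF cm[OF assms(1,2)] assms(6) compact_Icc adj_disj[OF assms(1-5)]] .

lemma Swn:
  assumes "1 \<le> i" "i \<le> m" "1 \<le> k" "k \<le> m" "k = Suc i \<or> i = Suc k"
    and "bdd_on f {a i..b i}" "bdd_on g {a k..b k}"
  shows "Sint (M i) (eps i) (\<lambda>x. f x * cauchy_tr (M k) (eps k) g (complex_of_real x))
       = - Sint (M k) (eps k) (\<lambda>y. g y * cauchy_tr (M i) (eps i) f (complex_of_real y))"
  using Sw[OF cm[OF assms(1,2)] cm[OF assms(3,4)] _ assms(6,7)] adj_disj[OF assms(1-5)]
  by (simp add: Int_commute)

lemma Psi_bdd: "Suc k \<le> m \<Longrightarrow> bdd_on (\<lambda>x. Psi M eps Q k (complex_of_real x)) {a (Suc k)..b (Suc k)}"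
proof (induction k)
  case 0
  show ?case by (simp add: bdd_on_poly)
next
  case (Suc k)
  have "bdd_on (\<lambda>y. cauchy_tr (M (Suc k)) (eps (Suc k)) (\<lambda>x. Psi M eps Q k (complex_of_real x)) (complex_of_real y))
      {a (Suc (Suc k))..b (Suc (Suc k))}"
    using Suc by (intro C_bdd) auto
  then show ?case by simp
qed

lemma up_bdd: "2 \<le> j \<Longrightarrow> j + d \<le> m \<Longrightarrow> bdd_on (\<lambda>x. nik_up M eps j d (complex_of_real x)) {a (j - 1)..b (j - 1)}"
proof (induction d arbitrary: j)
  case 0
  have "bdd_on (\<lambda>y. cauchy_tr (M j) (eps j) (\<lambda>_. 1) (complex_of_real y)) {a (j - 1)..b (j - 1)}"
    using 0 by (intro C_bdd bdd_on_const) auto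
  then show ?case by simp
next
  case (Suc d)
  have "bdd_on (\<lambda>x. nik_up M eps (Suc j) d (complex_of_real x)) {a (Suc j - 1)..b (Suc j - 1)}"
    using Suc by (intro Suc.IH) auto
  then have "bdd_on (\<lambda>y. cauchy_tr (M j) (eps j) (\<lambda>x. nik_up M eps (Suc j) d (complex_of_real x)) (complex_of_real y))
      {a (j - 1)..b (j - 1)}"
    using Suc by (intro C_bdd) auto
  then show ?case by simp
qed

lemma gup_bdd: "1 \<le> i \<Longrightarrow> i \<le> j \<Longrightarrow> j \<le> m \<Longrightarrow> bdd_on (gup M eps j i) {a i..b i}"
proof -
  assume h: "1 \<le> i" "i \<le> j" "j \<le> m"
  show ?thesis
  proof (cases "i = j")
    case True
    then show ?thesis unfolding gup_def by (simp add: bdd_on_const)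
  next
    case False
    have "bdd_on (\<lambda>x. nik_up M eps (Suc i) (j - Suc i) (complex_of_real x)) {a (Suc i - 1)..b (Suc i - 1)}"
      using h False by (intro up_bdd) auto
    then show ?thesis unfolding gup_def using False by simp
  qed
qed

lemma nik_up_gup: "i < j \<Longrightarrow> nik_up M eps (Suc i) (j - Suc i) w = cauchy_tr (M (Suc i)) (eps (Suc i)) (gup M eps j (Suc i)) w"
proof -
  assume ij: "i < j"
  show ?thesis
  proof (cases "Suc i = j")
    case True
    then have "gup M eps j (Suc i) = (\<lambda>_. 1)" unfolding gup_def by auto
    then show ?thesis using True by simp
  next
    case False
    then have jd: "j - Suc i = Suc (j - Suc (Suc i))" using ij by simp
    have "gup M eps j (Suc i) = (\<lambda>x. nik_up M eps (Suc (Suc i)) (j - Suc (Suc i)) (complex_of_real x))"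
      unfolding gup_def using False by auto
    then show ?thesis by (subst jd) simp
  qed
qed

lemma gup_rec: "i < j \<Longrightarrow> gup M eps j i x = cauchy_tr (M (Suc i)) (eps (Suc i)) (gup M eps j (Suc i)) (complex_of_real x)"
  using nik_up_gup[of i j] unfolding gup_def by simp

lemma down_bdd: "Suc j \<le> m \<Longrightarrow> d < j \<Longrightarrow> bdd_on (\<lambda>x. nik_down M eps j d (complex_of_real x)) {a (Suc j)..b (Suc j)}"
proof (induction d arbitrary: j)
  case 0
  have "bdd_on (\<lambda>y. cauchy_tr (M j) (eps j) (\<lambda>_. 1) (complex_of_real y)) {a (Suc j)..b (Suc j)}"
    using 0 by (intro C_bdd bdd_on_const) auto
  then show ?case by simp
next
  case (Suc d)
  have "bdd_on (\<lambda>x. nik_down M eps (j - 1) d (complex_of_real x)) {a (Suc (j - 1))..b (Suc (j - 1))}"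
    using Suc by (intro Suc.IH) auto
  then have "bdd_on (\<lambda>y. cauchy_tr (M j) (eps j) (\<lambda>x. nik_down M eps (j - 1) d (complex_of_real x)) (complex_of_real y))
      {a (Suc j)..b (Suc j)}"
    using Suc by (intro C_bdd) auto
  then show ?case by simp
qed

lemma hdn_bdd: "1 \<le> k \<Longrightarrow> k \<le> l \<Longrightarrow> l \<le> m \<Longrightarrow> bdd_on (hdn M eps k l) {a l..b l}"
proof -
  assume h: "1 \<le> k" "k \<le> l" "l \<le> m"
  show ?thesis
  proof (cases "l = k")
    case True
    then show ?thesis unfolding hdn_def by (simp add: bdd_on_const)
  next
    case False
    have "bdd_on (\<lambda>x. nik_down M eps (l - 1) (l - 1 - k) (complex_of_real x)) {a (Suc (l - 1))..b (Suc (l - 1))}"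
      using h False by (intro down_bdd) auto
    then show ?thesis unfolding hdn_def using False h by simp
  qed
qed

lemma nik_down_hdn: "1 \<le> k \<Longrightarrow> k \<le> l \<Longrightarrow> nik_down M eps l (l - k) w = cauchy_tr (M l) (eps l) (hdn M eps k l) w"
proof -
  assume h: "1 \<le> k" "k \<le> l"
  show ?thesis
  proof (cases "l = k")
    case True
    then have "hdn M eps k l = (\<lambda>_. 1)" unfolding hdn_def by auto
    then show ?thesis using True by simp
  next
    case False
    then have ld: "l - k = Suc (l - 1 - k)" using h by simp
    have "hdn M eps k l = (\<lambda>x. nik_down M eps (l - 1) (l - 1 - k) (complex_of_real x))"
      unfolding hdn_def using False by auto
    then show ?thesis by (subst ld) simp
  qed
qed

lemma hdn_rec: "1 \<le> k \<Longrightarrow> k \<le> l \<Longrightarrow> hdn M eps k (Suc l) x = cauchy_tr (M l) (eps l) (hdn M eps k l) (complex_of_real x)"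
  using nik_down_hdn[of k l] unfolding hdn_def by simp

lemma Lch_bdd:
  assumes z: "z \<notin> complex_of_real ` {a 1..b 1}"
  shows "Suc k \<le> m \<Longrightarrow> bdd_on (Lch M eps Q z k) {a (Suc k)..b (Suc k)}"
proof (induction k)
  case 0
  have "Lch M eps Q z 0 = (\<lambda>x. poly Q (complex_of_real x) * (1 / (z - complex_of_real x)))"
    by (rule ext) simp
  moreover have "bdd_on (\<lambda>x. poly Q (complex_of_real x) * (1 / (z - complex_of_real x))) {a 1..b 1}"
    by (intro bdd_on_mult bdd_on_poly bdd_on_inv compact_Icc z)
  ultimately show ?case by simp
next
  case (Suc k)
  have "bdd_on (\<lambda>y. cauchy_tr (M (Suc k)) (eps (Suc k)) (Lch M eps Q z k) (complex_of_real y))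
      {a (Suc (Suc k))..b (Suc (Suc k))}"
    using Suc by (intro C_bdd) auto
  then show ?case by simp
qed

lemma Rch_bdd:
  assumes z: "z \<notin> complex_of_real ` {a j..b j}" and j: "j \<le> m"
  shows "d < j \<Longrightarrow> bdd_on (Rch M eps z j d) {a (j - d)..b (j - d)}"
proof (induction d)
  case 0
  have "bdd_on (\<lambda>x. 1 / (z - complex_of_real x)) {a j..b j}"
    by (intro bdd_on_inv compact_Icc z)
  then show ?case by simp
next
  case (Suc d)
  have "bdd_on (\<lambda>y. cauchy_tr (M (j - d)) (eps (j - d)) (Rch M eps z j d) (complex_of_real y))
      {a (j - Suc d)..b (j - Suc d)}"
    using Suc j by (intro C_bdd) auto
  then show ?case by simp
qed

lemma chain:
  assumes pq: "1 \<le> p" "p \<le> q" "q \<le> m"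
    and bu: "\<And>l. p \<le> l \<Longrightarrow> l \<le> q \<Longrightarrow> bdd_on (u l) {a l..b l}"
    and bv: "\<And>l. p \<le> l \<Longrightarrow> l \<le> q \<Longrightarrow> bdd_on (v l) {a l..b l}"
    and ru: "\<And>l y. p \<le> l \<Longrightarrow> l < q \<Longrightarrow> y \<in> {a (Suc l)..b (Suc l)} \<Longrightarrow>
               u (Suc l) y = cauchy_tr (M l) (eps l) (u l) (complex_of_real y)"
    and rv: "\<And>l x. p \<le> l \<Longrightarrow> l < q \<Longrightarrow> x \<in> {a l..b l} \<Longrightarrow>
               v l x = cauchy_tr (M (Suc l)) (eps (Suc l)) (v (Suc l)) (complex_of_real x)"
  shows "Sint (M p) (eps p) (\<lambda>x. u p x * v p x) = (-1)^(q - p) * Sint (M q) (eps q) (\<lambda>x. u q x * v q x)"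
  using pq(2) bu bv ru rv pq(1)
proof (induction p rule: inc_induct)
  case base
  then show ?case by simp
next
  case (step p)
  have p1: "1 \<le> p" "p \<le> m" "1 \<le> Suc p" "Suc p \<le> m" using step.prems(5) step.hyps pq(3) by auto
  have bup: "bdd_on (u p) {a p..b p}" and bvp: "bdd_on (v p) {a p..b p}"
    and bvs: "bdd_on (v (Suc p)) {a (Suc p)..b (Suc p)}" and bus: "bdd_on (u (Suc p)) {a (Suc p)..b (Suc p)}"
    using step.prems(1,2) step.hyps by auto
  have Cv: "bdd_on (\<lambda>x. cauchy_tr (M (Suc p)) (eps (Suc p)) (v (Suc p)) (complex_of_real x)) {a p..b p}"
    using p1 bvs by (intro C_bdd) auto
  have Cu: "bdd_on (\<lambda>x. cauchy_tr (M p) (eps p) (u p) (complex_of_real x)) {a (Suc p)..b (Suc p)}"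
    using p1 bup by (intro C_bdd) auto
  have "Sint (M p) (eps p) (\<lambda>x. u p x * v p x)
      = Sint (M p) (eps p) (\<lambda>x. u p x * cauchy_tr (M (Suc p)) (eps (Suc p)) (v (Suc p)) (complex_of_real x))"
  proof (rule cmeas.Sint_cong[OF cm[OF p1(1,2)]])
    show "(\<lambda>x. u p x * v p x) \<in> borel_measurable borel"
      by (rule bdd_on_meas[OF bdd_on_mult[OF bup bvp]])
    show "(\<lambda>x. u p x * cauchy_tr (M (Suc p)) (eps (Suc p)) (v (Suc p)) (complex_of_real x)) \<in> borel_measurable borel"
      by (rule bdd_on_meas[OF bdd_on_mult[OF bup Cv]])
    fix x assume "x \<in> {a p..b p}"
    then show "u p x * v p x = u p x * cauchy_tr (M (Suc p)) (eps (Suc p)) (v (Suc p)) (complex_of_real x)"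
      using step.prems(4)[of p x] step.hyps by simp
  qed
  also have "\<dots> = - Sint (M (Suc p)) (eps (Suc p)) (\<lambda>y. v (Suc p) y * cauchy_tr (M p) (eps p) (u p) (complex_of_real y))"
    by (rule Swn[OF p1]) (auto intro: bup bvs)
  also have "Sint (M (Suc p)) (eps (Suc p)) (\<lambda>y. v (Suc p) y * cauchy_tr (M p) (eps p) (u p) (complex_of_real y))
      = Sint (M (Suc p)) (eps (Suc p)) (\<lambda>x. u (Suc p) x * v (Suc p) x)"
  proof (rule cmeas.Sint_cong[OF cm[OF p1(3,4)]])
    show "(\<lambda>y. v (Suc p) y * cauchy_tr (M p) (eps p) (u p) (complex_of_real y)) \<in> borel_measurable borel"
      by (rule bdd_on_meas[OF bdd_on_mult[OF bvs Cu]])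
    show "(\<lambda>x. u (Suc p) x * v (Suc p) x) \<in> borel_measurable borel"
      by (rule bdd_on_meas[OF bdd_on_mult[OF bus bvs]])
    fix y assume "y \<in> {a (Suc p)..b (Suc p)}"
    then show "v (Suc p) y * cauchy_tr (M p) (eps p) (u p) (complex_of_real y) = u (Suc p) y * v (Suc p) y"
      using step.prems(3)[of p y] step.hyps by simp
  qed
  also have "Sint (M (Suc p)) (eps (Suc p)) (\<lambda>x. u (Suc p) x * v (Suc p) x)
      = (-1)^(q - Suc p) * Sint (M q) (eps q) (\<lambda>x. u q x * v q x)"
    using step.IH step.prems by auto
  finally show ?case using step.hyps by (simp add: Suc_diff_Suc[symmetric])
qed


lemma A_step:
  assumes i: "1 \<le> i" "i < j" "j \<le> m"
    and z1: "z \<notin> complex_of_real ` {a 1..b 1}" and zj: "z \<notin> complex_of_real ` {a j..b j}"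
  shows "Sint (M i) (eps i) (\<lambda>x. Lch M eps Q z (i - 1) x * (z - complex_of_real x) * Rch M eps z j (j - i) x)
   = - (Sint (M i) (eps i) (Lch M eps Q z (i - 1)) * Sint (M (Suc i)) (eps (Suc i)) (Rch M eps z j (j - Suc i)))
     - Sint (M (Suc i)) (eps (Suc i)) (\<lambda>x. Lch M eps Q z (Suc i - 1) x * (z - complex_of_real x) * Rch M eps z j (j - Suc i) x)"
proof -
  define L where "L = Lch M eps Q z (i - 1)"
  define R' where "R' = Rch M eps z j (j - Suc i)"
  define F where "F = (\<lambda>x. L x * (z - complex_of_real x))"
  have ii: "1 \<le> i" "i \<le> m" "1 \<le> Suc i" "Suc i \<le> m" using i by auto
  have bL: "bdd_on L {a i..b i}" unfolding L_def using Lch_bdd[OF z1, of "i - 1" Q] i by simp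
  have bR: "bdd_on R' {a (Suc i)..b (Suc i)}" unfolding R'_def using Rch_bdd[OF zj i(3), of "j - Suc i"] i
    by (simp add: Suc_diff_Suc)
  have bLi: "bdd_on (Lch M eps Q z i) {a (Suc i)..b (Suc i)}" using Lch_bdd[OF z1, of i Q] i by simp
  have bF: "bdd_on F {a i..b i}" unfolding F_def by (intro bdd_on_mult bL bdd_on_diff bdd_on_const bdd_on_ofreal compact_Icc)
  have jd: "j - i = Suc (j - Suc i)" "j - (j - Suc i) = Suc i" using i by auto
  have rr: "Rch M eps z j (j - i) = (\<lambda>x. cauchy_tr (M (Suc i)) (eps (Suc i)) R' (complex_of_real x))"
    unfolding R'_def by (rule ext) (simp only: jd Rch.simps)
  have ie: "i = Suc (i - 1)" using i by simp
  have ll: "Lch M eps Q z i = (\<lambda>y. cauchy_tr (M i) (eps i) L (complex_of_real y))"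
  proof -
    obtain i' where i': "i = Suc i'" using i by (cases i) auto
    show ?thesis unfolding L_def i' by (rule ext) simp
  qed
  have bC: "bdd_on (\<lambda>y. cauchy_tr (M i) (eps i) F (complex_of_real y)) {a (Suc i)..b (Suc i)}"
    using bF ii by (intro C_bdd) auto
  have "Sint (M i) (eps i) (\<lambda>x. Lch M eps Q z (i - 1) x * (z - complex_of_real x) * Rch M eps z j (j - i) x)
      = Sint (M i) (eps i) (\<lambda>x. F x * cauchy_tr (M (Suc i)) (eps (Suc i)) R' (complex_of_real x))"
    unfolding rr F_def L_def ..
  also have "\<dots> = - Sint (M (Suc i)) (eps (Suc i)) (\<lambda>y. R' y * cauchy_tr (M i) (eps i) F (complex_of_real y))"
    by (rule Swn[OF ii]) (auto intro: bF bR)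
  also have "Sint (M (Suc i)) (eps (Suc i)) (\<lambda>y. R' y * cauchy_tr (M i) (eps i) F (complex_of_real y))
     = Sint (M (Suc i)) (eps (Suc i)) (\<lambda>y. (z - complex_of_real y) * (Lch M eps Q z i y * R' y) + Sint (M i) (eps i) L * R' y)"
  proof (rule cmeas.Sint_cong[OF cm[OF ii(3,4)]])
    show "(\<lambda>y. R' y * cauchy_tr (M i) (eps i) F (complex_of_real y)) \<in> borel_measurable borel"
      by (rule bdd_on_meas[OF bdd_on_mult[OF bR bC]])
    show "(\<lambda>y. (z - complex_of_real y) * (Lch M eps Q z i y * R' y) + Sint (M i) (eps i) L * R' y) \<in> borel_measurable borel"
      by (rule bdd_on_meas[OF bdd_on_add[OF bdd_on_mult[OF bdd_on_diff[OF bdd_on_const bdd_on_ofreal[OF compact_Icc]] bdd_on_mult[OF bLi bR]] bdd_on_mult[OF bdd_on_const bR]]])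
    fix y assume y: "y \<in> {a (Suc i)..b (Suc i)}"
    have yn: "y \<notin> {a i..b i}" using y adj_disj[OF ii(1,2,3,4)] by auto
    have eq: "cauchy_tr (M i) (eps i) F (complex_of_real y)
        = (z - complex_of_real y) * cauchy_tr (M i) (eps i) L (complex_of_real y) + Sint (M i) (eps i) L"
      unfolding F_def by (rule cmeas.res1[OF cm[OF ii(1,2)] bL yn])
    show "R' y * cauchy_tr (M i) (eps i) F (complex_of_real y)
        = (z - complex_of_real y) * (Lch M eps Q z i y * R' y) + Sint (M i) (eps i) L * R' y"
      by (subst eq, unfold ll) (simp add: algebra_simps)
  qed
  also have "\<dots> = Sint (M (Suc i)) (eps (Suc i)) (\<lambda>y. (z - complex_of_real y) * (Lch M eps Q z i y * R' y))
        + Sint (M i) (eps i) L * Sint (M (Suc i)) (eps (Suc i)) R'"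
    by (simp only: cmeas.Sint_add[OF cm[OF ii(3,4)] bdd_on_mult[OF bdd_on_diff[OF bdd_on_const bdd_on_ofreal[OF compact_Icc]] bdd_on_mult[OF bLi bR]] bdd_on_mult[OF bdd_on_const bR]] cmeas.Sint_cmult[OF cm[OF ii(3,4)]])
  also have "Sint (M (Suc i)) (eps (Suc i)) (\<lambda>y. (z - complex_of_real y) * (Lch M eps Q z i y * R' y))
      = Sint (M (Suc i)) (eps (Suc i)) (\<lambda>x. Lch M eps Q z (Suc i - 1) x * (z - complex_of_real x) * Rch M eps z j (j - Suc i) x)"
    unfolding R'_def by (simp add: mult_ac)
  finally show ?thesis unfolding L_def R'_def by (simp add: algebra_simps)
qed

lemma T_step:
  assumes i: "1 \<le> i" "i < j" "j \<le> m"
    and zi: "z \<notin> complex_of_real ` {a i..b i}" and zs: "z \<notin> complex_of_real ` {a (Suc i)..b (Suc i)}"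
  shows "cauchy_tr (M i) (eps i) (\<lambda>x. Psi M eps Q (i - 1) (complex_of_real x) * gup M eps j i x) z
   = Psi M eps Q i z * nik_up M eps (Suc i) (j - Suc i) z
     - cauchy_tr (M (Suc i)) (eps (Suc i)) (\<lambda>x. Psi M eps Q i (complex_of_real x) * gup M eps j (Suc i) x) z"
proof -
  define P where "P = (\<lambda>x. Psi M eps Q (i - 1) (complex_of_real x))"
  define g' where "g' = gup M eps j (Suc i)"
  define f where "f = (\<lambda>x. P x / (z - complex_of_real x))"
  have ii: "1 \<le> i" "i \<le> m" "1 \<le> Suc i" "Suc i \<le> m" using i by auto
  have ie: "i = Suc (i - 1)" using i by simp
  have bP: "bdd_on P {a i..b i}" unfolding P_def using Psi_bdd[of "i - 1" Q] i by simp
  have bPi: "bdd_on (\<lambda>x. Psi M eps Q i (complex_of_real x)) {a (Suc i)..b (Suc i)}" using Psi_bdd[of i Q] i by simp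
  have bg: "bdd_on g' {a (Suc i)..b (Suc i)}" unfolding g'_def using gup_bdd[of "Suc i" j] i by simp
  have bf: "bdd_on f {a i..b i}"
  proof -
    have "bdd_on (\<lambda>x. P x * (1 / (z - complex_of_real x))) {a i..b i}"
      by (intro bdd_on_mult bP bdd_on_inv compact_Icc zi)
    then show ?thesis unfolding f_def by simp
  qed
  have Psi_i: "\<And>w. Psi M eps Q i w = cauchy_tr (M i) (eps i) P w"
  proof -
    fix w
    obtain i' where i': "i = Suc i'" using i by (cases i) auto
    show "Psi M eps Q i w = cauchy_tr (M i) (eps i) P w" unfolding P_def i' by simp
  qed
  have bC: "bdd_on (\<lambda>y. cauchy_tr (M i) (eps i) f (complex_of_real y)) {a (Suc i)..b (Suc i)}"
    using bf ii by (intro C_bdd) auto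
  have "cauchy_tr (M i) (eps i) (\<lambda>x. Psi M eps Q (i - 1) (complex_of_real x) * gup M eps j i x) z
      = Sint (M i) (eps i) (\<lambda>x. f x * cauchy_tr (M (Suc i)) (eps (Suc i)) g' (complex_of_real x))"
    unfolding ct_Sint[of "M i" "eps i"] f_def g'_def P_def gup_rec[OF i(2)] by (simp add: algebra_simps)
  also have "\<dots> = - Sint (M (Suc i)) (eps (Suc i)) (\<lambda>y. g' y * cauchy_tr (M i) (eps i) f (complex_of_real y))"
    by (rule Swn[OF ii]) (auto intro: bf bg)
  also have "Sint (M (Suc i)) (eps (Suc i)) (\<lambda>y. g' y * cauchy_tr (M i) (eps i) f (complex_of_real y))
     = Sint (M (Suc i)) (eps (Suc i)) (\<lambda>y. Psi M eps Q i (complex_of_real y) * g' y * (1 / (z - complex_of_real y))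
          - Psi M eps Q i z * (g' y * (1 / (z - complex_of_real y))))"
  proof (rule cmeas.Sint_cong[OF cm[OF ii(3,4)]])
    show "(\<lambda>y. g' y * cauchy_tr (M i) (eps i) f (complex_of_real y)) \<in> borel_measurable borel"
      by (rule bdd_on_meas[OF bdd_on_mult[OF bg bC]])
    show "(\<lambda>y. Psi M eps Q i (complex_of_real y) * g' y * (1 / (z - complex_of_real y))
          - Psi M eps Q i z * (g' y * (1 / (z - complex_of_real y)))) \<in> borel_measurable borel"
      by (rule bdd_on_meas[OF bdd_on_diff[OF bdd_on_mult[OF bdd_on_mult[OF bPi bg] bdd_on_inv[OF compact_Icc zs]] bdd_on_mult[OF bdd_on_const bdd_on_mult[OF bg bdd_on_inv[OF compact_Icc zs]]]]])
    fix y assume y: "y \<in> {a (Suc i)..b (Suc i)}"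
    have yn: "y \<notin> {a i..b i}" using y adj_disj[OF ii(1,2,3,4)] by auto
    have zy: "z \<noteq> complex_of_real y" using zs y by auto
    have eq: "cauchy_tr (M i) (eps i) f (complex_of_real y)
        = (cauchy_tr (M i) (eps i) P (complex_of_real y) - cauchy_tr (M i) (eps i) P z) / (z - complex_of_real y)"
      unfolding f_def by (rule cmeas.res2[OF cm[OF ii(1,2)] bP yn zi zy])
    show "g' y * cauchy_tr (M i) (eps i) f (complex_of_real y)
        = Psi M eps Q i (complex_of_real y) * g' y * (1 / (z - complex_of_real y))
          - Psi M eps Q i z * (g' y * (1 / (z - complex_of_real y)))"
      by (subst eq, unfold Psi_i) (simp add: algebra_simps diff_divide_distrib)
  qed
  also have "\<dots> = Sint (M (Suc i)) (eps (Suc i)) (\<lambda>y. Psi M eps Q i (complex_of_real y) * g' y * (1 / (z - complex_of_real y)))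
       - Psi M eps Q i z * Sint (M (Suc i)) (eps (Suc i)) (\<lambda>y. g' y * (1 / (z - complex_of_real y)))"
    by (simp only: cmeas.Sint_diff[OF cm[OF ii(3,4)] bdd_on_mult[OF bdd_on_mult[OF bPi bg] bdd_on_inv[OF compact_Icc zs]]
          bdd_on_mult[OF bdd_on_const bdd_on_mult[OF bg bdd_on_inv[OF compact_Icc zs]]]] cmeas.Sint_cmult[OF cm[OF ii(3,4)]])
  also have "Sint (M (Suc i)) (eps (Suc i)) (\<lambda>y. g' y * (1 / (z - complex_of_real y))) = nik_up M eps (Suc i) (j - Suc i) z"
    unfolding nik_up_gup[OF i(2)] ct_Sint g'_def by simp
  also have "Sint (M (Suc i)) (eps (Suc i)) (\<lambda>y. Psi M eps Q i (complex_of_real y) * g' y * (1 / (z - complex_of_real y)))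
      = cauchy_tr (M (Suc i)) (eps (Suc i)) (\<lambda>x. Psi M eps Q i (complex_of_real x) * gup M eps j (Suc i) x) z"
    unfolding ct_Sint g'_def by simp
  finally show ?thesis by (simp add: algebra_simps)
qed

lemma ev_notin: "eventually (\<lambda>z. z \<notin> complex_of_real ` {c..d}) at_infinity"
  unfolding eventually_at_infinity
proof (rule exI[of _ "\<bar>c\<bar> + \<bar>d\<bar> + 1"], intro allI impI notI)
  fix z :: complex assume z: "\<bar>c\<bar> + \<bar>d\<bar> + 1 \<le> norm z" "z \<in> complex_of_real ` {c..d}"
  then obtain x where x: "x \<in> {c..d}" "z = complex_of_real x" by blast
  then have "norm z = \<bar>x\<bar>" by simp
  moreover have "\<bar>x\<bar> \<le> \<bar>c\<bar> + \<bar>d\<bar>" using x(1) by auto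
  ultimately show False using z(1) by simp
qed

lemma bigo_tendsto0:
  fixes f g :: "complex \<Rightarrow> complex"
  assumes "f \<in> O[F](g)" "(g \<longlongrightarrow> 0) F"
  shows "(f \<longlongrightarrow> 0) F"
proof -
  obtain c where c: "c > 0" "eventually (\<lambda>x. norm (f x) \<le> c * norm (g x)) F"
    using assms(1) by (elim landau_o.bigE)
  have "((\<lambda>x. c * norm (g x)) \<longlongrightarrow> 0) F"
    using tendsto_mult_right_zero[OF tendsto_norm_zero[OF assms(2)]] by simp
  then show ?thesis by (rule Lim_null_comparison[OF c(2)])
qed

lemma inv_pow_tendsto: "((\<lambda>z::complex. 1 / z ^ (n + 1)) \<longlongrightarrow> 0) at_infinity"
proof -
  have "((\<lambda>z::complex. inverse z ^ (n + 1)) \<longlongrightarrow> 0 ^ (n + 1)) at_infinity"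
    by (intro tendsto_power tendsto_inverse_0)
  then show ?thesis by (simp add: power_inverse divide_inverse)
qed

lemma Phi_eq:
  assumes j: "1 \<le> j" "j \<le> m"
    and HP: "(\<lambda>z. poly Q z * s_hat M eps 1 j z - poly P z) \<in> O[at_infinity](\<lambda>z. 1 / z ^ (nn + 1))"
    and z: "z \<notin> complex_of_real ` {a 1..b 1}"
  shows "poly Q z * s_hat M eps 1 j z - poly P z
       = cauchy_tr (M 1) (eps 1) (\<lambda>x. poly Q (complex_of_real x) * gup M eps j 1 x) z"
proof -
  have m1: "1 \<le> (1::nat)" "1 \<le> m" using j by auto
  have sh: "\<And>w. s_hat M eps 1 j w = cauchy_tr (M 1) (eps 1) (gup M eps j 1) w"
    unfolding s_hat_def using j nik_up_gup[of 0 j] by simp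
  have bg: "bdd_on (gup M eps j 1) {a 1..b 1}" using gup_bdd[of 1 j] j by simp
  obtain p where p: "\<And>w. w \<notin> complex_of_real ` {a 1..b 1} \<Longrightarrow>
     poly Q w * cauchy_tr (M 1) (eps 1) (gup M eps j 1) w
       - cauchy_tr (M 1) (eps 1) (\<lambda>x. poly Q (complex_of_real x) * gup M eps j 1 x) w = poly p w"
    using cmeas.poly_ct[OF cm[OF m1] bg, of Q "eps 1"] by blast
  define G where "G = (\<lambda>w. cauchy_tr (M 1) (eps 1) (\<lambda>x. poly Q (complex_of_real x) * gup M eps j 1 x) w)"
  have lim1: "((\<lambda>w. poly Q w * s_hat M eps 1 j w - poly P w) \<longlongrightarrow> 0) at_infinity"
    by (rule bigo_tendsto0[OF HP inv_pow_tendsto])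
  have lim2: "(G \<longlongrightarrow> 0) at_infinity"
    unfolding G_def by (rule cmeas.ct_tendsto[OF cm[OF m1]]) (intro bdd_on_mult bdd_on_poly compact_Icc bg)
  have lim3: "((\<lambda>w. (poly Q w * s_hat M eps 1 j w - poly P w) - G w) \<longlongrightarrow> 0) at_infinity"
    using tendsto_diff[OF lim1 lim2] by simp
  have ev: "eventually (\<lambda>w. (poly Q w * s_hat M eps 1 j w - poly P w) - G w = poly (p - P) w) at_infinity"
    using ev_notin[of "a 1" "b 1"]
  proof (rule eventually_mono)
    fix w assume w: "w \<notin> complex_of_real ` {a 1..b 1}"
    show "(poly Q w * s_hat M eps 1 j w - poly P w) - G w = poly (p - P) w"
      using p[OF w] unfolding sh G_def by (simp add: algebra_simps)
  qed
  have "((\<lambda>w. poly (p - P) w) \<longlongrightarrow> 0) at_infinity"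
    by (rule Lim_transform_eventually[OF lim3 ev])
  then have "p - P = 0" by (rule poly_tendsto_0_imp_zero)
  then have "(poly Q z * s_hat M eps 1 j z - poly P z) - G z = 0"
    using p[OF z] unfolding sh G_def by (simp add: algebra_simps)
  then show ?thesis unfolding G_def by simp
qed


lemma sq1: "(-1::complex)^n * (-1)^n = 1"
  by (simp add: power_mult_distrib[symmetric])

lemma part3:
  assumes j: "2 \<le> j" "j \<le> m"
    and HP: "(\<lambda>z. poly Q z * s_hat M eps 1 j z - poly P z) \<in> O[at_infinity](\<lambda>z. 1 / z ^ (nn + 1))"
    and z: "\<forall>k\<in>{1..j}. z \<notin> complex_of_real ` {a k..b k}"
  shows "poly Q z * s_hat M eps 1 j z - poly P z =
     (\<Sum>k=2..j. (-1) ^ k * s_hat M eps k j z * Psi M eps Q (k - 1) z) + (-1) ^ (j + 1) * Psi M eps Q j z"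
proof -
  define T where "T i = cauchy_tr (M i) (eps i) (\<lambda>x. Psi M eps Q (i - 1) (complex_of_real x) * gup M eps j i x) z" for i
  define c where "c i = Psi M eps Q i z * nik_up M eps (Suc i) (j - Suc i) z" for i
  have rec: "T i = c i - T (Suc i)" if "1 \<le> i" "i < j" for i
  proof -
    have zi: "z \<notin> complex_of_real ` {a i..b i}" and zs: "z \<notin> complex_of_real ` {a (Suc i)..b (Suc i)}"
      using z that by auto
    show ?thesis unfolding T_def c_def using T_step[OF that(1,2) j(2) zi zs, of Q] by simp
  qed
  have tel: "T 1 = (\<Sum>i=1..<j. (-1)^(i - 1) * c i) + (-1)^(j - 1) * T j"
    using telesc[of 1 j T c] rec j by simp
  have z1: "z \<notin> complex_of_real ` {a 1..b 1}" using z j by auto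
  have T1: "T 1 = poly Q z * s_hat M eps 1 j z - poly P z"
    unfolding T_def using Phi_eq[of j Q P nn z] j HP z1 by simp
  have Tj: "T j = Psi M eps Q j z"
  proof -
    obtain j' where j': "j = Suc j'" using j by (cases j) auto
    show ?thesis unfolding T_def j' gup_def by simp
  qed
  have re: "(\<Sum>k=2..j. (-1) ^ k * s_hat M eps k j z * Psi M eps Q (k - 1) z) = (\<Sum>i=1..<j. (-1)^(i - 1) * c i)"
  proof -
    have "(\<Sum>k=2..j. (-1) ^ k * s_hat M eps k j z * Psi M eps Q (k - 1) z)
        = (\<Sum>i=1..<j. (-1) ^ Suc i * s_hat M eps (Suc i) j z * Psi M eps Q (Suc i - 1) z)"
      by (rule sum.reindex_bij_witness[of _ Suc "\<lambda>k. k - 1"]) auto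
    also have "\<dots> = (\<Sum>i=1..<j. (-1)^(i - 1) * c i)"
    proof (rule sum.cong[OF refl])
      fix i assume i: "i \<in> {1..<j}"
      have i1: "1 \<le> i" "i < j" using i by auto
      have sg: "(-1::complex) ^ Suc i = (-1)^(i - 1)" using i1 by (intro m1_eq) presburger
      have "s_hat M eps (Suc i) j z = nik_up M eps (Suc i) (j - Suc i) z" using i1 unfolding s_hat_def by simp
      then show "(-1) ^ Suc i * s_hat M eps (Suc i) j z * Psi M eps Q (Suc i - 1) z = (-1)^(i - 1) * c i"
        unfolding c_def sg by simp
    qed
    finally show ?thesis .
  qed
  have sj: "(-1::complex)^(j + 1) = (-1)^(j - 1)" using j by (intro m1_eq) presburger
  show ?thesis using tel T1 Tj re sj by simp
qed

lemma sgn_help: "(x::complex) * (y * - ((y * P) * (w * S))) = - (x * w * (y * y)) * (S * P)"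
  by (simp add: mult_ac)

lemma part2:
  assumes j: "2 \<le> j" "j \<le> m"
    and HP: "\<And>i. 1 \<le> i \<Longrightarrow> i \<le> m \<Longrightarrow>
       (\<lambda>z. poly Q z * s_hat M eps 1 i z - poly (P i) z) \<in> O[at_infinity](\<lambda>z. 1 / z ^ (nn i + 1))"
    and z1: "z \<notin> complex_of_real ` {a 1..b 1}" and zj: "z \<notin> complex_of_real ` {a j..b j}"
  shows "Psi M eps Q j z = (\<Sum>k=2..j. (-1) ^ k * s_hat M eps j k z * (poly Q z * s_hat M eps 1 (k - 1) z - poly (P (k - 1)) z))
            + (-1) ^ (j + 1) * (poly Q z * s_hat M eps 1 j z - poly (P j) z)"
proof -
  define Phi where "Phi i = poly Q z * s_hat M eps 1 i z - poly (P i) z" for i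
  define A where "A i = Sint (M i) (eps i) (\<lambda>x. Lch M eps Q z (i - 1) x * (z - complex_of_real x) * Rch M eps z j (j - i) x)" for i
  define c where "c i = - (Sint (M i) (eps i) (Lch M eps Q z (i - 1)) * Sint (M (Suc i)) (eps (Suc i)) (Rch M eps z j (j - Suc i)))" for i
  have m1: "1 \<le> (1::nat)" "1 \<le> m" "1 \<le> j" "j \<le> m" using j by auto
  have rec: "A i = c i - A (Suc i)" if "1 \<le> i" "i < j" for i
    using A_step[OF that j(2) z1 zj, of Q] unfolding A_def c_def by simp
  have tel: "A 1 = (\<Sum>i=1..<j. (-1)^(i - 1) * c i) + (-1)^(j - 1) * A j"
    using telesc[of 1 j A c] rec j by simp
  have bR: "bdd_on (Rch M eps z j (j - l)) {a l..b l}" if "1 \<le> l" "l \<le> j" for l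
    using Rch_bdd[OF zj j(2), of "j - l"] that by simp
  have bL: "bdd_on (Lch M eps Q z (l - 1)) {a l..b l}" if "1 \<le> l" "l \<le> m" for l
    using Lch_bdd[OF z1, of "l - 1" Q] that by simp
  have rR: "Rch M eps z j (j - l) x = cauchy_tr (M (Suc l)) (eps (Suc l)) (Rch M eps z j (j - Suc l)) (complex_of_real x)"
    if "l < j" for l x
  proof -
    have jd: "j - l = Suc (j - Suc l)" "j - (j - Suc l) = Suc l" using that by auto
    show ?thesis by (simp only: jd Rch.simps)
  qed
  have A1: "A 1 = Sint (M 1) (eps 1) (\<lambda>x. Psi M eps Q (1 - 1) (complex_of_real x) * Rch M eps z j (j - 1) x)"
    unfolding A_def
  proof (rule cmeas.Sint_cong[OF cm[OF m1(1,2)]])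
    show "(\<lambda>x. Lch M eps Q z (1 - 1) x * (z - complex_of_real x) * Rch M eps z j (j - 1) x) \<in> borel_measurable borel"
      by (rule bdd_on_meas[OF bdd_on_mult[OF bdd_on_mult[OF bL[OF m1(1,2)] bdd_on_diff[OF bdd_on_const bdd_on_ofreal[OF compact_Icc]]] bR[OF m1(1) m1(3)]]])
    show "(\<lambda>x. Psi M eps Q (1 - 1) (complex_of_real x) * Rch M eps z j (j - 1) x) \<in> borel_measurable borel"
      using bdd_on_meas[OF bdd_on_mult[OF bdd_on_poly[OF compact_Icc] bR[OF m1(1) m1(3)]]] by simp
    fix x assume x: "x \<in> {a 1..b 1}"
    then have "z - complex_of_real x \<noteq> 0" using z1 by auto
    then show "Lch M eps Q z (1 - 1) x * (z - complex_of_real x) * Rch M eps z j (j - 1) x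
        = Psi M eps Q (1 - 1) (complex_of_real x) * Rch M eps z j (j - 1) x" by simp
  qed
  have chP: "Sint (M 1) (eps 1) (\<lambda>x. Psi M eps Q (1 - 1) (complex_of_real x) * Rch M eps z j (j - 1) x)
      = (-1)^(j - 1) * Sint (M j) (eps j) (\<lambda>x. Psi M eps Q (j - 1) (complex_of_real x) * Rch M eps z j (j - j) x)"
  proof (rule chain[where u="\<lambda>l x. Psi M eps Q (l - 1) (complex_of_real x)" and v="\<lambda>l. Rch M eps z j (j - l)"])
    show "1 \<le> (1::nat)" "1 \<le> j" "j \<le> m" using j by auto
    show "bdd_on (\<lambda>x. Psi M eps Q (l - 1) (complex_of_real x)) {a l..b l}" if "1 \<le> l" "l \<le> j" for l
      using Psi_bdd[of "l - 1" Q] that j by simp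
    show "bdd_on (Rch M eps z j (j - l)) {a l..b l}" if "1 \<le> l" "l \<le> j" for l using bR that by simp
    show "Psi M eps Q (Suc l - 1) (complex_of_real y) = cauchy_tr (M l) (eps l) (\<lambda>x. Psi M eps Q (l - 1) (complex_of_real x)) (complex_of_real y)"
      if l1: "1 \<le> l" "l < j" for l y
    proof -
      obtain l' where l': "l = Suc l'" using l1 by (cases l) auto
      show ?thesis unfolding l' by simp
    qed
    show "Rch M eps z j (j - l) x = cauchy_tr (M (Suc l)) (eps (Suc l)) (Rch M eps z j (j - Suc l)) (complex_of_real x)"
      if "1 \<le> l" "l < j" for l x using rR that by simp
  qed
  have PsiJ: "Sint (M j) (eps j) (\<lambda>x. Psi M eps Q (j - 1) (complex_of_real x) * Rch M eps z j (j - j) x) = Psi M eps Q j z"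
  proof -
    obtain j' where j': "j = Suc j'" using j by (cases j) auto
    show ?thesis unfolding j' by (simp add: ct_Sint)
  qed
  have PsiA: "Psi M eps Q j z = (-1)^(j - 1) * A 1"
    using A1 chP PsiJ sq1[of "j - 1"] by (metis mult.assoc mult_1)
  have Aj: "A j = Sint (M j) (eps j) (Lch M eps Q z (j - 1))"
    unfolding A_def
  proof (rule cmeas.Sint_cong[OF cm[OF m1(3,4)]])
    show "(\<lambda>x. Lch M eps Q z (j - 1) x * (z - complex_of_real x) * Rch M eps z j (j - j) x) \<in> borel_measurable borel"
      by (rule bdd_on_meas[OF bdd_on_mult[OF bdd_on_mult[OF bL[OF m1(3,4)] bdd_on_diff[OF bdd_on_const bdd_on_ofreal[OF compact_Icc]]] bR[OF m1(3) order_refl]]])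
    show "Lch M eps Q z (j - 1) \<in> borel_measurable borel" by (rule bdd_on_meas[OF bL[OF m1(3,4)]])
    fix x assume x: "x \<in> {a j..b j}"
    then have "z - complex_of_real x \<noteq> 0" using zj by auto
    then show "Lch M eps Q z (j - 1) x * (z - complex_of_real x) * Rch M eps z j (j - j) x = Lch M eps Q z (j - 1) x"
      by simp
  qed
  have SL: "Sint (M i) (eps i) (Lch M eps Q z (i - 1)) = (-1)^(i - 1) * Phi i" if i: "1 \<le> i" "i \<le> j" for i
  proof -
    have im: "1 \<le> i" "i \<le> m" using i j by auto
    have ch: "Sint (M 1) (eps 1) (\<lambda>x. Lch M eps Q z (1 - 1) x * gup M eps i 1 x)
        = (-1)^(i - 1) * Sint (M i) (eps i) (\<lambda>x. Lch M eps Q z (i - 1) x * gup M eps i i x)"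
    proof (rule chain[where u="\<lambda>l. Lch M eps Q z (l - 1)" and v="\<lambda>l. gup M eps i l"])
      show "1 \<le> (1::nat)" "1 \<le> i" "i \<le> m" using im by auto
      show "bdd_on (Lch M eps Q z (l - 1)) {a l..b l}" if "1 \<le> l" "l \<le> i" for l using bL that im by simp
      show "bdd_on (gup M eps i l) {a l..b l}" if "1 \<le> l" "l \<le> i" for l using gup_bdd that im by simp
      show "Lch M eps Q z (Suc l - 1) y = cauchy_tr (M l) (eps l) (Lch M eps Q z (l - 1)) (complex_of_real y)"
        if l1: "1 \<le> l" "l < i" for l y
      proof -
        obtain l' where l': "l = Suc l'" using l1 by (cases l) auto
        show ?thesis unfolding l' by simp
      qed
      show "gup M eps i l x = cauchy_tr (M (Suc l)) (eps (Suc l)) (gup M eps i (Suc l)) (complex_of_real x)"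
        if "1 \<le> l" "l < i" for l x using gup_rec that by simp
    qed
    have "Sint (M 1) (eps 1) (\<lambda>x. Lch M eps Q z (1 - 1) x * gup M eps i 1 x)
        = cauchy_tr (M 1) (eps 1) (\<lambda>x. poly Q (complex_of_real x) * gup M eps i 1 x) z"
      by (simp add: ct_Sint algebra_simps)
    also have "\<dots> = Phi i" unfolding Phi_def using Phi_eq[OF im HP[OF im] z1] by simp
    finally have "Phi i = (-1)^(i - 1) * Sint (M i) (eps i) (Lch M eps Q z (i - 1))"
      using ch unfolding gup_def by simp
    then show ?thesis using sq1[of "i - 1"] by (metis mult.assoc mult_1)
  qed
  have SR: "Sint (M (Suc i)) (eps (Suc i)) (Rch M eps z j (j - Suc i)) = (-1)^(j - Suc i) * s_hat M eps j (Suc i) z"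
    if i: "1 \<le> i" "i < j" for i
  proof -
    have ch: "Sint (M (Suc i)) (eps (Suc i)) (\<lambda>x. hdn M eps (Suc i) (Suc i) x * Rch M eps z j (j - Suc i) x)
        = (-1)^(j - Suc i) * Sint (M j) (eps j) (\<lambda>x. hdn M eps (Suc i) j x * Rch M eps z j (j - j) x)"
    proof (rule chain[where u="\<lambda>l. hdn M eps (Suc i) l" and v="\<lambda>l. Rch M eps z j (j - l)"])
      show "1 \<le> Suc i" "Suc i \<le> j" "j \<le> m" using i j by auto
      show "bdd_on (hdn M eps (Suc i) l) {a l..b l}" if "Suc i \<le> l" "l \<le> j" for l
        using hdn_bdd that j by simp
      show "bdd_on (Rch M eps z j (j - l)) {a l..b l}" if "Suc i \<le> l" "l \<le> j" for l using bR that by simp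
      show "hdn M eps (Suc i) (Suc l) y = cauchy_tr (M l) (eps l) (hdn M eps (Suc i) l) (complex_of_real y)"
        if "Suc i \<le> l" "l < j" for l y using hdn_rec that by simp
      show "Rch M eps z j (j - l) x = cauchy_tr (M (Suc l)) (eps (Suc l)) (Rch M eps z j (j - Suc l)) (complex_of_real x)"
        if "Suc i \<le> l" "l < j" for l x using rR that by simp
    qed
    have e1: "Sint (M j) (eps j) (\<lambda>x. hdn M eps (Suc i) j x * Rch M eps z j (j - j) x) = s_hat M eps j (Suc i) z"
    proof -
      have "Sint (M j) (eps j) (\<lambda>x. hdn M eps (Suc i) j x * Rch M eps z j (j - j) x)
          = cauchy_tr (M j) (eps j) (hdn M eps (Suc i) j) z" by (simp add: ct_Sint)
      also have "\<dots> = nik_down M eps j (j - Suc i) z" using nik_down_hdn[of "Suc i" j z] i by simp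
      also have "\<dots> = s_hat M eps j (Suc i) z"
        unfolding s_hat_def using i by auto
      finally show ?thesis .
    qed
    show ?thesis using ch e1 unfolding hdn_def by simp
  qed
  have AjP: "A j = (-1)^(j - 1) * Phi j" using Aj SL[of j] j by simp
  have ci: "c i = - (((-1)^(i - 1) * Phi i) * ((-1)^(j - Suc i) * s_hat M eps j (Suc i) z))" if "1 \<le> i" "i < j" for i
    unfolding c_def using SL[of i] SR[of i] that by simp
  have "Psi M eps Q j z = (-1)^(j - 1) * (\<Sum>i=1..<j. (-1)^(i - 1) * c i) + (-1)^(j - 1) * ((-1)^(j - 1) * ((-1)^(j - 1) * Phi j))"
    using PsiA tel AjP by (simp add: algebra_simps)
  also have "(-1)^(j - 1) * ((-1)^(j - 1) * ((-1)^(j - 1) * Phi j)) = (-1::complex)^(j + 1) * Phi j"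
  proof -
    have sj: "(-1::complex)^(j + 1) = (-1)^(j - 1)" using j by (intro m1_eq) presburger
    show ?thesis using sq1[of "j - 1"] sj by (metis mult.assoc mult_1)
  qed
  also have "(-1)^(j - 1) * (\<Sum>i=1..<j. (-1)^(i - 1) * c i) = (\<Sum>i=1..<j. (-1) ^ Suc i * s_hat M eps j (Suc i) z * Phi i)"
    unfolding sum_distrib_left
  proof (rule sum.cong[OF refl])
    fix i assume "i \<in> {1..<j}"
    then have i: "1 \<le> i" "i < j" by auto
    have "(-1::complex)^(j - 1) * ((-1)^(i - 1) * c i)
        = - ((-1)^(j - 1) * (-1)^(j - Suc i) * ((-1)^(i - 1) * (-1)^(i - 1))) * (s_hat M eps j (Suc i) z * Phi i)"
      unfolding ci[OF i] by (rule sgn_help)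
    also have "\<dots> = - ((-1)^(j - 1 + (j - Suc i))) * (s_hat M eps j (Suc i) z * Phi i)"
      by (simp only: sq1 mult_1_right power_add)
    also have "- ((-1::complex)^(j - 1 + (j - Suc i))) = (-1)^(Suc (j - 1 + (j - Suc i)))" by simp
    also have "(-1::complex)^(Suc (j - 1 + (j - Suc i))) = (-1)^(Suc i)" using i by (intro m1_eq) presburger
    finally show "(-1::complex)^(j - 1) * ((-1)^(i - 1) * c i) = (-1) ^ Suc i * s_hat M eps j (Suc i) z * Phi i"
      by (simp add: mult_ac)
  qed
  also have "(\<Sum>i=1..<j. (-1) ^ Suc i * s_hat M eps j (Suc i) z * Phi i)
      = (\<Sum>k=2..j. (-1) ^ k * s_hat M eps j k z * Phi (k - 1))"
    by (rule sum.reindex_bij_witness[of _ "\<lambda>k. k - 1" Suc]) auto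
  finally show ?thesis unfolding Phi_def .
qed

end

theorem lemma7:
  fixes m :: nat
    and M :: "nat \<Rightarrow> real measure" and eps :: "nat \<Rightarrow> real"
    and a b :: "nat \<Rightarrow> real"
    and n :: "nat \<Rightarrow> nat"
    and Q :: "complex poly" and P :: "nat \<Rightarrow> complex poly"
  assumes m_pos: "m \<ge> 1"
    and intervals: "\<And>j. j \<in> {1..m} \<Longrightarrow> a j < b j"
    and meas: "\<And>j. j \<in> {1..m} \<Longrightarrow> in_class_M (M j) (eps j) (a j) (b j)"
    and disj: "\<And>j. j \<in> {1..<m} \<Longrightarrow> {a j..b j} \<inter> {a (Suc j)..b (Suc j)} = {}"
    and Q_nz: "Q \<noteq> 0"
    and Q_deg: "degree Q \<le> (\<Sum>j=1..m. n j)"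
    and HP: "\<And>j. j \<in> {1..m} \<Longrightarrow>
       (\<lambda>z. poly Q z * s_hat M eps 1 j z - poly (P j) z)
         \<in> O[at_infinity](\<lambda>z. 1 / z ^ (n j + 1))"
  defines "Phi \<equiv> (\<lambda>j z. poly Q z * s_hat M eps 1 j z - poly (P j) z)"
    and "Delta \<equiv> (\<lambda>j. complex_of_real ` {a j..b j})"
  shows "(\<forall>z. z \<notin> Delta 1 \<longrightarrow> Psi M eps Q 1 z = Phi 1 z)
    \<and> (\<forall>j\<in>{2..m}. \<forall>z. z \<notin> Delta 1 \<union> Delta j \<longrightarrow>
          Psi M eps Q j z =
            (\<Sum>k=2..j. (-1) ^ k * s_hat M eps j k z * Phi (k - 1) z)
            + (-1) ^ (j + 1) * Phi j z)
    \<and> (\<forall>j\<in>{2..m}. \<forall>z. z \<notin> (\<Union>k\<in>{1..j}. Delta k) \<longrightarrow>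
          Phi j z =
            (\<Sum>k=2..j. (-1) ^ k * s_hat M eps k j z * Psi M eps Q (k - 1) z)
            + (-1) ^ (j + 1) * Psi M eps Q j z)"
proof -
  interpret nik m M eps a b
    using meas disj by unfold_locales
  have HP': "\<And>i. 1 \<le> i \<Longrightarrow> i \<le> m \<Longrightarrow>
       (\<lambda>z. poly Q z * s_hat M eps 1 i z - poly (P i) z) \<in> O[at_infinity](\<lambda>z. 1 / z ^ (n i + 1))"
    using HP by auto
  have p1: "\<forall>z. z \<notin> Delta 1 \<longrightarrow> Psi M eps Q 1 z = Phi 1 z"
  proof (intro allI impI)
    fix z assume z: "z \<notin> Delta 1"
    have "Phi 1 z = cauchy_tr (M 1) (eps 1) (\<lambda>x. poly Q (complex_of_real x) * gup M eps 1 1 x) z"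
      unfolding Phi_def using Phi_eq[of 1 Q "P 1" "n 1" z] HP'[of 1] m_pos z unfolding Delta_def by simp
    then show "Psi M eps Q 1 z = Phi 1 z" unfolding gup_def by simp
  qed
  have p2: "\<forall>j\<in>{2..m}. \<forall>z. z \<notin> Delta 1 \<union> Delta j \<longrightarrow>
          Psi M eps Q j z = (\<Sum>k=2..j. (-1) ^ k * s_hat M eps j k z * Phi (k - 1) z) + (-1) ^ (j + 1) * Phi j z"
  proof (intro ballI allI impI)
    fix j z assume j: "j \<in> {2..m}" and z: "z \<notin> Delta 1 \<union> Delta j"
    show "Psi M eps Q j z = (\<Sum>k=2..j. (-1) ^ k * s_hat M eps j k z * Phi (k - 1) z) + (-1) ^ (j + 1) * Phi j z"
      unfolding Phi_def using part2[of j Q P n z] HP' j z unfolding Delta_def by auto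
  qed
  have p3: "\<forall>j\<in>{2..m}. \<forall>z. z \<notin> (\<Union>k\<in>{1..j}. Delta k) \<longrightarrow>
          Phi j z = (\<Sum>k=2..j. (-1) ^ k * s_hat M eps k j z * Psi M eps Q (k - 1) z) + (-1) ^ (j + 1) * Psi M eps Q j z"
  proof (intro ballI allI impI)
    fix j z assume j: "j \<in> {2..m}" and z: "z \<notin> (\<Union>k\<in>{1..j}. Delta k)"
    have j1: "2 \<le> j" "j \<le> m" "1 \<le> j" using j by auto
    have zz: "\<forall>k\<in>{1..j}. z \<notin> complex_of_real ` {a k..b k}" using z unfolding Delta_def by auto
    show "Phi j z = (\<Sum>k=2..j. (-1) ^ k * s_hat M eps k j z * Psi M eps Q (k - 1) z) + (-1) ^ (j + 1) * Psi M eps Q j z"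
      unfolding Phi_def by (rule part3[OF j1(1,2) HP'[OF j1(3,2)] zz])
  qed
  show ?thesis using p1 p2 p3 by blast
qed

end
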